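(* (1) For any $l,m\in\mathbb Z^3$, $$|\beta(l,m)|\lesssim R^{3+\gamma}\langle l+m\rangle^{-1}\langle l-m\rangle^{-1}\big\langle|l+m|-|l-m|\big\rangle^{-1}.$$ (2) For any $0\le\delta<1$ and $m\in\mathbb Z^3$, $\sum_{l\in\mathbb Z^3}|l|^\delta|\beta(l,m)|^2\lesssim R^{2(3+\gamma)}\langle m\rangle^{-2+\delta}$; and for any $0\le\delta<1$ and $l\in\mathbb Z^3$, $\sum_{m\in\mathbb Z^3}|m|^\delta|\beta(l,m)|^2\lesssim R^{2(3+\gamma)}\langle l\rangle^{-2+\delta}$.
   Context: $0\le\gamma\le1$, $R>0$, $L=\frac{3+\sqrt2}{2}R$, $\lambda=R/L=\frac{2}{3+\sqrt2}$, $\langle x\rangle=\sqrt{1+|x|^2}$, $\operatorname{sinc}(x)=\sin x/x$ with $\operatorname{sinc}(0)=1$, and $$\beta(l,m)=(2R)^{3+\gamma}(4\pi)^2\int_0^1r^{2+\gamma}\operatorname{sinc}(\pi\lambda r|l-m|)\operatorname{sinc}(\pi\lambda r|l+m|)\,dr.$$ Implicit constants are independent of $R,l,m$. *)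

theory Defs
  imports "HOL-Analysis.Analysis"
begin

definition rvec :: "int ^ 3 \<Rightarrow> real ^ 3" where
  "rvec l = (\<chi> i. real_of_int (l $ i))"

definition vlen :: "int ^ 3 \<Rightarrow> real" where
  "vlen l = norm (rvec l)"

definition jbr :: "real \<Rightarrow> real" where
  "jbr x = sqrt (1 + x\<^sup>2)"

definition sinc :: "real \<Rightarrow> real" where
  "sinc x = (if x = 0 then 1 else sin x / x)"

definition lam :: real where
  "lam = 2 / (3 + sqrt 2)"

definition beta :: "real \<Rightarrow> real \<Rightarrow> int ^ 3 \<Rightarrow> int ^ 3 \<Rightarrow> real" where
  "beta \<gamma> R l m = (2 * R) powr (3 + \<gamma>) * (4 * pi)\<^sup>2 *
     integral {0..1} (\<lambda>r. r powr (2 + \<gamma>) * sinc (pi * lam * r * vlen (l - m))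
                                           * sinc (pi * lam * r * vlen (l + m)))"

text \<open>Real power x^d for x \<ge> 0 with the convention 0^0 = 1.\<close>
definition rpow :: "real \<Rightarrow> real \<Rightarrow> real" where
  "rpow x d = (if x = 0 then (if d = 0 then 1 else 0) else x powr d)"

end

theory Submission
  imports Defs
begin
lemma tele_int_interval:
  fixes G :: "int \<Rightarrow> real"
  shows "(\<Sum>n\<in>{a..<a + int k}. G (n+1) - G n) = G (a + int k) - G a"
proof (induction k)
  case 0 then show ?case by simp
next
  case (Suc k)
  have "{a..<a + int (Suc k)} = insert (a + int k) {a..<a + int k}" by auto
  then show ?case using Suc by (simp add: ac_simps)
qed

lemma tele_int:
  fixes G h :: "int \<Rightarrow> real"
  assumes mono: "\<And>n. G n \<le> G (n+1)" and bnd: "\<And>n. \<bar>G n\<bar> \<le> B"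
    and fin: "finite N" and hG: "\<And>n. n \<in> N \<Longrightarrow> h n \<le> G (n+1) - G n"
  shows "sum h N \<le> 2*B"
proof (cases "N = {}")
  case True
  have "0 \<le> B" using bnd[of 0] by linarith
  then show ?thesis using True by simp
next
  case False
  define lo where "lo = Min N"
  define hi where "hi = Max N"
  have bnds: "lo \<le> n \<and> n \<le> hi" if "n \<in> N" for n
    using fin that unfolding lo_def hi_def by simp
  have sub: "N \<subseteq> {lo..<lo + int (nat (hi + 1 - lo))}"
  proof
    fix n assume "n \<in> N"
    with bnds[OF this] show "n \<in> {lo..<lo + int (nat (hi + 1 - lo))}" by simp
  qed
  have "sum h N \<le> (\<Sum>n\<in>N. G (n+1) - G n)" by (rule sum_mono) (rule hG)
  also have "\<dots> \<le> (\<Sum>n\<in>{lo..<lo + int (nat (hi + 1 - lo))}. G (n+1) - G n)"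
    by (rule sum_mono2) (use sub mono in auto)
  also have "\<dots> = G (lo + int (nat (hi + 1 - lo))) - G lo" by (rule tele_int_interval)
  also have "\<dots> \<le> 2*B" using bnd[of lo] bnd[of "lo + int (nat (hi + 1 - lo))"] by linarith
  finally show ?thesis .
qed

lemma powr_int_on:
  fixes k :: "real \<Rightarrow> real"
  assumes "0 \<le> p" "0 \<le> a" and k: "continuous_on {a..b} k"
  shows "(\<lambda>r. r powr p * k r) integrable_on {a..b}"
proof (cases "p = 0")
  case True
  have kint: "k integrable_on {a..b}" by (rule integrable_continuous_interval[OF k])
  show ?thesis
    by (rule integrable_spike_finite[where S="{0}", OF _ _ kint]) (auto simp: True)
next
  case False
  have "continuous_on {a..b} (\<lambda>r. r powr p * k r)"
    using assms False by (intro continuous_intros continuous_on_powr') auto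
  then show ?thesis by (rule integrable_continuous_interval)
qed

lemma osc:
  fixes p c \<phi> :: real
  assumes p0: "0 \<le> p" and p2: "p \<le> 2" and c1: "1 \<le> c"
  shows "\<bar>integral {0..1} (\<lambda>r. r powr p * cos (c*r + \<phi>))\<bar> \<le> 4/c"
proof -
  define f where "f = (\<lambda>r. r powr p * cos (c*r + \<phi>))"
  define t where "t = 1/c"
  have t0: "0 < t" and t1: "t \<le> 1" using c1 by (auto simp: t_def)
  have contcos: "continuous_on S (\<lambda>r. cos (c*r + \<phi>))" for S
    by (intro continuous_intros)
  have int01: "f integrable_on {0..1}" unfolding f_def
    by (rule powr_int_on[OF p0 _ contcos]) simp
  have split: "integral {0..1} f = integral {0..t} f + integral {t..1} f"
    using Henstock_Kurzweil_Integration.integral_combine[OF _ t1 int01] t0 by simp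
  have int0t: "f integrable_on {0..t}" unfolding f_def
    by (rule powr_int_on[OF p0 _ contcos]) simp
  have b1: "\<bar>integral {0..t} f\<bar> \<le> t"
  proof -
    have "norm (integral {0..t} f) \<le> integral {0..t} (\<lambda>_. 1::real)"
    proof (rule integral_norm_bound_integral[OF int0t])
      show "(\<lambda>_. 1::real) integrable_on {0..t}"
        by (intro integrable_continuous_interval continuous_intros)
      fix x assume x: "x \<in> {0..t}"
      have "x powr p \<le> 1" using x t1 p0 by (auto intro!: powr_le1)
      moreover have "0 \<le> x powr p" by simp
      ultimately show "norm (f x) \<le> 1" unfolding f_def
        by (simp add: abs_mult) (metis abs_cos_le_one mult_le_one abs_ge_zero abs_of_nonneg)
    qed
    then show ?thesis using t0 by simp
  qed
  define H where "H = (\<lambda>r. r powr p * sin (c*r + \<phi>) / c)"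
  define E where "E = (\<lambda>r. p * r powr (p-1) * sin (c*r + \<phi>) / c)"
  have dH: "(H has_vector_derivative (E x + f x)) (at x within {t..1})" if "x \<in> {t..1}" for x
  proof -
    have x0: "0 < x" using that t0 by auto
    have "(H has_real_derivative (E x + f x)) (at x)"
      unfolding H_def E_def f_def using x0 c1
      by (auto intro!: derivative_eq_intros simp: field_simps)
    then show ?thesis
      by (simp add: has_real_derivative_iff_has_vector_derivative has_vector_derivative_at_within)
  qed
  have intH: "((\<lambda>x. E x + f x) has_integral (H 1 - H t)) {t..1}"
    by (rule fundamental_theorem_of_calculus[OF t1 dH])
  have contE: "continuous_on {t..1} E" unfolding E_def using t0 c1
    by (intro continuous_intros) auto
  have intE: "E integrable_on {t..1}" by (rule integrable_continuous_interval[OF contE])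
  have intf: "f integrable_on {t..1}" unfolding f_def
    by (rule powr_int_on[OF p0 _ contcos]) (use t0 in simp)
  have eq: "integral {t..1} f = (H 1 - H t) - integral {t..1} E"
  proof -
    have "integral {t..1} (\<lambda>x. E x + f x) = H 1 - H t" using intH by (rule integral_unique)
    moreover have "integral {t..1} (\<lambda>x. E x + f x) = integral {t..1} E + integral {t..1} f"
      by (rule integral_add[OF intE intf])
    ultimately show ?thesis by simp
  qed
  define P where "P = (\<lambda>r. r powr p / c)"
  have dP: "(P has_vector_derivative (p * x powr (p-1) / c)) (at x within {t..1})" if "x \<in> {t..1}" for x
  proof -
    have x0: "0 < x" using that t0 by auto
    have "(P has_real_derivative (p * x powr (p-1) / c)) (at x)"
      unfolding P_def using x0 c1
      by (auto intro!: derivative_eq_intros simp: field_simps)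
    then show ?thesis
      by (simp add: has_real_derivative_iff_has_vector_derivative has_vector_derivative_at_within)
  qed
  have intP: "((\<lambda>x. p * x powr (p-1) / c) has_integral (P 1 - P t)) {t..1}"
    by (rule fundamental_theorem_of_calculus[OF t1 dP])
  have bE: "\<bar>integral {t..1} E\<bar> \<le> 1/c"
  proof -
    have "norm (integral {t..1} E) \<le> integral {t..1} (\<lambda>x. p * x powr (p-1) / c)"
    proof (rule integral_norm_bound_integral[OF intE])
      show "(\<lambda>x. p * x powr (p-1) / c) integrable_on {t..1}" using intP by blast
      fix x assume x: "x \<in> {t..1}"
      have "\<bar>sin (c*x + \<phi>)\<bar> \<le> 1" by simp
      then show "norm (E x) \<le> p * x powr (p-1) / c" unfolding E_def using p0 c1
        by (simp add: abs_mult divide_right_mono mult_left_le)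
    qed
    also have "\<dots> = P 1 - P t" using intP by (rule integral_unique)
    also have "\<dots> \<le> 1/c" unfolding P_def using c1 by (simp add: divide_right_mono)
    finally show ?thesis by simp
  qed
  have bH: "\<bar>H 1 - H t\<bar> \<le> 2/c"
  proof -
    have "\<bar>H r\<bar> \<le> 1/c" if "0 < r" "r \<le> 1" for r
    proof -
      have "r powr p \<le> 1" using that p0 by (auto intro!: powr_le1)
      moreover have "\<bar>sin (c*r + \<phi>)\<bar> \<le> 1" by simp
      ultimately have "\<bar>r powr p * sin (c*r + \<phi>)\<bar> \<le> 1"
        by (simp add: abs_mult) (rule mult_le_one; simp)
      then show ?thesis unfolding H_def using c1 by (simp add: abs_div divide_right_mono)
    qed
    from this[of 1] this[of t] t0 t1 show ?thesis by simp
  qed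
  have "\<bar>integral {0..1} f\<bar> \<le> t + 2/c + 1/c"
    using split eq b1 bE bH by linarith
  also have "\<dots> = 4/c" unfolding t_def by simp
  finally show ?thesis unfolding f_def .
qed

lemma jbr_ge1: "1 \<le> jbr x"
  unfolding jbr_def by simp

lemma jbr_pos: "0 < jbr x"
  using jbr_ge1[of x] by linarith

lemma jbr_minus: "jbr (-x) = jbr x" unfolding jbr_def by simp

lemma jbr_sq: "(jbr x)^2 = 1 + x^2" unfolding jbr_def by simp

lemma jbr_mono: "\<bar>x\<bar> \<le> \<bar>y\<bar> \<Longrightarrow> jbr x \<le> jbr y"
  unfolding jbr_def by (simp add: abs_le_square_iff)

lemma jbr_prod_le: assumes "1 \<le> a" "1 \<le> b" shows "jbr a * jbr b \<le> 2 * (a * b)"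
proof -
  have "jbr a * jbr b = sqrt ((1 + a^2) * (1 + b^2))" unfolding jbr_def by (simp add: real_sqrt_mult)
  also have "\<dots> \<le> sqrt ((2*(a*b))^2)"
  proof (rule real_sqrt_le_mono)
    have "1 \<le> a^2" "1 \<le> b^2" using assms by (simp_all add: one_le_power)
    then have "1 + a^2 \<le> 2*a^2" "1 + b^2 \<le> 2*b^2" by linarith+
    then have "(1 + a^2) * (1 + b^2) \<le> (2*a^2) * (2*b^2)" by (intro mult_mono) auto
    then show "(1 + a^2) * (1 + b^2) \<le> (2*(a*b))^2" by (simp add: power_mult_distrib)
  qed
  also have "\<dots> = 2*(a*b)" by (simp only: real_sqrt_abs) (use assms in simp)
  finally show ?thesis .
qed

lemma jbr_sq_le: assumes "1 \<le> a" shows "jbr a * jbr a \<le> 2 * (a * a)"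
  using jbr_prod_le[OF assms assms] .

lemma triv_int:
  fixes g :: "real \<Rightarrow> real"
  assumes p0: "0 \<le> p" and g: "continuous_on {0..1} g" and g1: "\<And>r. \<bar>g r\<bar> \<le> 1"
  shows "\<bar>integral {0..1} (\<lambda>r. r powr p * g r)\<bar> \<le> 1"
proof -
  have "norm (integral {0..1} (\<lambda>r. r powr p * g r)) \<le> integral {0..1} (\<lambda>_::real. 1::real)"
  proof (rule integral_norm_bound_integral[OF powr_int_on[OF p0 _ g]])
    show "(0::real) \<le> 0" by simp
    show "(\<lambda>_::real. 1::real) integrable_on {0..1}"
      by (intro integrable_continuous_interval continuous_intros)
    fix x :: real assume x: "x \<in> {0..1}"
    have "x powr p \<le> 1" using x p0 by (auto intro!: powr_le1)
    then show "norm (x powr p * g x) \<le> 1"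
      using g1[of x] by (simp add: abs_mult) (rule mult_le_one; simp)
  qed
  then show ?thesis by simp
qed

lemma Jcos:
  assumes p0: "0 \<le> p" and p2: "p \<le> 2"
  shows "\<bar>integral {0..1} (\<lambda>r. r powr p * cos (c*r))\<bar> \<le> 6 / jbr c"
proof (cases "1 \<le> \<bar>c\<bar>")
  case True
  have "integral {0..1} (\<lambda>r. r powr p * cos (c*r)) = integral {0..1} (\<lambda>r. r powr p * cos (\<bar>c\<bar>*r + 0))"
    by (rule integral_cong) (simp add: abs_if)
  also have "\<bar>\<dots>\<bar> \<le> 4 / \<bar>c\<bar>" by (rule osc[OF p0 p2 True])
  also have "\<dots> \<le> 6 / jbr c"
  proof -
    have "jbr c * jbr c \<le> 2 * (\<bar>c\<bar> * \<bar>c\<bar>)" using jbr_sq_le[OF True] jbr_minus by (simp add: jbr_def)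
    moreover have "3/2 * \<bar>c\<bar> * (3/2 * \<bar>c\<bar>) = 9/4 * (\<bar>c\<bar> * \<bar>c\<bar>)" by (simp add: field_simps)
    moreover have "0 \<le> \<bar>c\<bar> * \<bar>c\<bar>" by simp
    ultimately have "(jbr c)^2 \<le> (3/2 * \<bar>c\<bar>)^2" unfolding power2_eq_square by linarith
    then have "jbr c \<le> 3/2 * \<bar>c\<bar>"
      by (rule power2_le_imp_le) simp
    then show ?thesis using True jbr_pos[of c] by (simp add: field_simps)
  qed
  finally show ?thesis .
next
  case False
  have "\<bar>integral {0..1} (\<lambda>r. r powr p * cos (c*r))\<bar> \<le> 1"
    by (rule triv_int[OF p0]) (auto intro!: continuous_intros)
  also have "1 \<le> 6 / jbr c"
  proof -
    have "c^2 \<le> 1" using False by (simp add: abs_square_le_1)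
    then have "1 + c^2 \<le> 6^2" by simp
    then have "jbr c \<le> 6" unfolding jbr_def by (rule real_le_lsqrt[rotated]) simp_all
    then show ?thesis using jbr_pos[of c] by (simp add: field_simps)
  qed
  finally show ?thesis .
qed

lemma Jsin:
  fixes b p :: real
  assumes p0: "0 \<le> p" and p2: "p \<le> 2" and b1: "1 \<le> b"
  shows "\<bar>integral {0..1} (\<lambda>r. r powr p * sin (b*r))\<bar> \<le> 4 / b"
proof -
  have "integral {0..1} (\<lambda>r. r powr p * sin (b*r)) = integral {0..1} (\<lambda>r. r powr p * cos (b*r + -(pi/2)))"
    by (rule integral_cong) (simp add: cos_diff)
  also have "\<bar>\<dots>\<bar> \<le> 4 / b" by (rule osc[OF p0 p2 b1])
  finally show ?thesis .
qed

lemma sinc_nz: "x \<noteq> 0 \<Longrightarrow> sinc x = sin x / x" unfolding sinc_def by simp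

lemma jbr0: "jbr 0 = 1" unfolding jbr_def by simp

lemma I_bound_both:
  fixes \<gamma> a b :: real
  assumes g0: "0 \<le> \<gamma>" and g1: "\<gamma> \<le> 1" and a1: "1 \<le> a" and b1: "1 \<le> b"
  shows "\<bar>integral {0..1} (\<lambda>r. r powr (2+\<gamma>) * sinc (a*r) * sinc (b*r))\<bar>
           \<le> 12 / (jbr a * jbr b * jbr (b - a))"
proof -
  define J1 where "J1 = integral {0..1} (\<lambda>r. r powr \<gamma> * cos ((a-b)*r))"
  define J2 where "J2 = integral {0..1} (\<lambda>r. r powr \<gamma> * cos ((a+b)*r))"
  have pw: "r powr (2+\<gamma>) = r^2 * r powr \<gamma>" if "0 < r" for r :: real
    using that by (simp add: powr_add powr_realpow[of r 2, simplified])
  have eq: "r powr (2+\<gamma>) * sinc (a*r) * sinc (b*r)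
      = (1/(2*a*b)) * (r powr \<gamma> * cos ((a-b)*r) - r powr \<gamma> * cos ((a+b)*r))" if "r \<in> {0..1}" for r :: real
  proof (cases "r = 0")
    case True then show ?thesis by simp
  next
    case False
    then have r0: "0 < r" using that by simp
    have "r powr (2+\<gamma>) * sinc (a*r) * sinc (b*r) = r^2 * r powr \<gamma> * (sin (a*r)/(a*r)) * (sin (b*r)/(b*r))"
      using r0 a1 b1 by (simp add: pw sinc_nz)
    also have "\<dots> = (r powr \<gamma>/(a*b)) * (sin (a*r) * sin (b*r))"
      using r0 a1 b1 by (simp add: field_simps power2_eq_square)
    also have "\<dots> = (r powr \<gamma>/(a*b)) * ((cos ((a-b)*r) - cos ((a+b)*r))/2)"
      by (simp add: sin_times_sin algebra_simps)
    also have "\<dots> = (1/(2*a*b)) * (r powr \<gamma> * cos ((a-b)*r) - r powr \<gamma> * cos ((a+b)*r))"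
      by (simp add: field_simps)
    finally show ?thesis .
  qed
  have i1: "(\<lambda>r. r powr \<gamma> * cos ((a-b)*r)) integrable_on {0..1}"
    by (rule powr_int_on[OF g0]) (auto intro!: continuous_intros)
  have i2: "(\<lambda>r. r powr \<gamma> * cos ((a+b)*r)) integrable_on {0..1}"
    by (rule powr_int_on[OF g0]) (auto intro!: continuous_intros)
  have "integral {0..1} (\<lambda>r. r powr (2+\<gamma>) * sinc (a*r) * sinc (b*r))
      = integral {0..1} (\<lambda>r. (1/(2*a*b)) * (r powr \<gamma> * cos ((a-b)*r) - r powr \<gamma> * cos ((a+b)*r)))"
    by (rule integral_cong) (rule eq)
  also have "\<dots> = (1/(2*a*b)) * (J1 - J2)"
    unfolding J1_def J2_def by (simp add: integral_diff[OF i1 i2])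
  finally have I: "integral {0..1} (\<lambda>r. r powr (2+\<gamma>) * sinc (a*r) * sinc (b*r)) = (1/(2*a*b)) * (J1 - J2)" .
  have bJ1: "\<bar>J1\<bar> \<le> 6 / jbr (a-b)" unfolding J1_def by (rule Jcos) (use g0 g1 in auto)
  have "\<bar>J2\<bar> \<le> 6 / jbr (a+b)" unfolding J2_def by (rule Jcos) (use g0 g1 in auto)
  also have "\<dots> \<le> 6 / jbr (a-b)"
    using jbr_mono[of "a-b" "a+b"] a1 b1 jbr_pos[of "a-b"] jbr_pos[of "a+b"]
    by (simp add: frac_le)
  finally have bJ2: "\<bar>J2\<bar> \<le> 6 / jbr (a-b)" .
  have ab0: "0 < a*b" using a1 b1 by simp
  have "\<bar>(1/(2*a*b)) * (J1 - J2)\<bar> = (1/(2*a*b)) * \<bar>J1 - J2\<bar>"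
    using ab0 a1 b1 by (simp add: abs_mult)
  also have "\<dots> \<le> (1/(2*a*b)) * (12 / jbr (a-b))"
    using bJ1 bJ2 ab0 by (intro mult_left_mono) auto
  also have "\<dots> = 6 / (a*b) / jbr (a-b)" by (simp add: field_simps)
  also have "\<dots> \<le> 12 / (jbr a * jbr b) / jbr (a-b)"
  proof -
    have "6 / (a*b) \<le> 12 / (jbr a * jbr b)"
      using jbr_prod_le[OF a1 b1] ab0 jbr_pos[of a] jbr_pos[of b]
      by (simp add: field_simps)
    then show ?thesis using jbr_pos[of "a-b"] divide_right_mono[of "6/(a*b)" "12/(jbr a*jbr b)" "jbr(a-b)"] by simp
  qed
  also have "\<dots> = 12 / (jbr a * jbr b * jbr (b - a))"
    using jbr_minus[of "a-b"] by simp
  finally show ?thesis using I by simp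
qed

lemma I_bound_one:
  fixes \<gamma> b :: real
  assumes g0: "0 \<le> \<gamma>" and g1: "\<gamma> \<le> 1" and b1: "1 \<le> b"
  shows "\<bar>integral {0..1} (\<lambda>r. r powr (2+\<gamma>) * sinc (b*r))\<bar> \<le> 8 / (jbr b * jbr b)"
proof -
  have pw: "r powr (2+\<gamma>) = r * r powr (1+\<gamma>)" if "0 < r" for r :: real
    using that by (simp add: powr_add power2_eq_square)
  have eq: "r powr (2+\<gamma>) * sinc (b*r) = (1/b) * (r powr (1+\<gamma>) * sin (b*r))" if "r \<in> {0..1}" for r :: real
  proof (cases "r = 0")
    case True then show ?thesis using g0 by simp
  next
    case False
    then have r0: "0 < r" using that by simp
    show ?thesis using r0 b1 by (subst pw[OF r0]) (simp add: sinc_nz field_simps)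
  qed
  have "integral {0..1} (\<lambda>r. r powr (2+\<gamma>) * sinc (b*r)) = integral {0..1} (\<lambda>r. (1/b) * (r powr (1+\<gamma>) * sin (b*r)))"
    by (rule integral_cong) (rule eq)
  also have "\<dots> = (1/b) * integral {0..1} (\<lambda>r. r powr (1+\<gamma>) * sin (b*r))" by simp
  finally have I: "integral {0..1} (\<lambda>r. r powr (2+\<gamma>) * sinc (b*r)) = (1/b) * integral {0..1} (\<lambda>r. r powr (1+\<gamma>) * sin (b*r))" .
  have J: "\<bar>integral {0..1} (\<lambda>r. r powr (1+\<gamma>) * sin (b*r))\<bar> \<le> 4/b"
    by (rule Jsin) (use g0 g1 b1 in auto)
  have "\<bar>(1/b) * integral {0..1} (\<lambda>r. r powr (1+\<gamma>) * sin (b*r))\<bar>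
      = (1/b) * \<bar>integral {0..1} (\<lambda>r. r powr (1+\<gamma>) * sin (b*r))\<bar>"
    using b1 by (simp only: abs_mult) simp
  also have "\<dots> \<le> (1/b) * (4/b)"
    by (rule mult_left_mono[OF J]) (use b1 in simp)
  also have "\<dots> = 4 / (b*b)" by simp
  also have "\<dots> \<le> 8 / (jbr b * jbr b)"
    using jbr_sq_le[OF b1] b1 jbr_pos[of b] by (simp add: field_simps)
  finally show ?thesis using I by simp
qed

lemma I_bound:
  fixes \<gamma> a b :: real
  assumes g0: "0 \<le> \<gamma>" and g1: "\<gamma> \<le> 1" and a: "a = 0 \<or> 1 \<le> a" and b: "b = 0 \<or> 1 \<le> b"
  shows "\<bar>integral {0..1} (\<lambda>r. r powr (2+\<gamma>) * sinc (a*r) * sinc (b*r))\<bar>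
           \<le> 12 / (jbr a * jbr b * jbr (b - a))"
proof -
  have s0: "sinc 0 = 1" unfolding sinc_def by simp
  consider "a = 0" "b = 0" | "a = 0" "1 \<le> b" | "1 \<le> a" "b = 0" | "1 \<le> a" "1 \<le> b" using a b by blast
  then show ?thesis
  proof cases
    case 1
    have "\<bar>integral {0..1} (\<lambda>r. r powr (2+\<gamma>) * 1)\<bar> \<le> 1"
      by (rule triv_int) (use g0 in \<open>auto intro!: continuous_intros\<close>)
    then show ?thesis using 1 s0 by (simp add: jbr0)
  next
    case 2
    have "\<bar>integral {0..1} (\<lambda>r. r powr (2+\<gamma>) * sinc (b*r))\<bar> \<le> 8 / (jbr b * jbr b)"
      by (rule I_bound_one[OF g0 g1 2(2)])
    also have "\<dots> \<le> 12 / (jbr b * jbr b)"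
      using jbr_pos[of b] by (simp add: frac_le)
    finally show ?thesis using 2 s0 by (simp add: jbr0)
  next
    case 3
    have "\<bar>integral {0..1} (\<lambda>r. r powr (2+\<gamma>) * sinc (a*r))\<bar> \<le> 8 / (jbr a * jbr a)"
      by (rule I_bound_one[OF g0 g1 3(1)])
    also have "\<dots> \<le> 12 / (jbr a * jbr a)"
      using jbr_pos[of a] by (simp add: frac_le)
    finally show ?thesis using 3 s0 jbr_minus[of a] by (simp add: jbr0)
  next
    case 4
    then show ?thesis using I_bound_both[OF g0 g1] by blast
  qed
qed

lemma three_cases: "(j::3) = 1 \<or> j = 2 \<or> j = 3" by (rule exhaust_3)

lemma three_45: "(4::3) = 1" "(5::3) = 2" by simp_all

lemma sum3_rot: "(\<Sum>i\<in>UNIV. f i) = f (j::3) + f (j+1) + f (j+2)"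
  using three_cases[of j] by (elim disjE) (simp_all add: sum_3 three_45 ac_simps)

lemma three_ne: "(j::3) + 1 \<noteq> j" "j + 2 \<noteq> j" "j + 2 \<noteq> j + 1"
  using three_cases[of j] by auto

lemma three_all: "(i::3) = j \<or> i = j + 1 \<or> i = j + 2"
  using three_cases[of j] three_cases[of i] by (elim disjE) simp_all

definition dotr :: "int^3 \<Rightarrow> int^3 \<Rightarrow> real" where
  "dotr l m = rvec l \<bullet> rvec m"

lemma rvec_add: "rvec (l + m) = rvec l + rvec m"
  unfolding rvec_def by (simp add: vec_eq_iff)
lemma rvec_diff: "rvec (l - m) = rvec l - rvec m"
  unfolding rvec_def by (simp add: vec_eq_iff)

lemma vlen_sq: "(vlen l)^2 = dotr l l"
  unfolding vlen_def dotr_def by (simp add: power2_norm_eq_inner)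

lemma dotr_sum: "dotr l m = (\<Sum>i\<in>UNIV. real_of_int (l$i) * real_of_int (m$i))"
  unfolding dotr_def rvec_def inner_vec_def by simp

lemma dotr_comm: "dotr l m = dotr m l" unfolding dotr_def by (simp add: inner_commute)

lemma vlen_plus_sq: "(vlen (l + m))^2 = (vlen l)^2 + 2 * dotr l m + (vlen m)^2"
  unfolding vlen_sq dotr_def rvec_add by (simp add: inner_add_left inner_add_right inner_commute)

lemma vlen_minus_sq: "(vlen (l - m))^2 = (vlen l)^2 - 2 * dotr l m + (vlen m)^2"
  unfolding vlen_sq dotr_def rvec_diff by (simp add: inner_diff_left inner_diff_right inner_commute)

lemma vlen_nonneg: "0 \<le> vlen l" unfolding vlen_def by simp

lemma vlen_cases: "vlen l = 0 \<or> 1 \<le> vlen l"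
proof -
  define S where "S = (\<Sum>i\<in>UNIV. l$i * l$i)"
  have eq: "(vlen l)^2 = real_of_int S"
    unfolding vlen_sq dotr_sum S_def by simp
  have S0: "0 \<le> S" unfolding S_def by (intro sum_nonneg) simp
  show ?thesis
  proof (cases "S = 0")
    case True then show ?thesis using eq by simp
  next
    case False
    then have "1 \<le> S" using S0 by linarith
    then have "1 \<le> (vlen l)^2" using eq by simp
    then have "\<bar>1\<bar> \<le> \<bar>vlen l\<bar>" using abs_le_square_iff[of 1 "vlen l"] by simp
    then show ?thesis using vlen_nonneg[of l] by simp
  qed
qed

lemma vlen_zero_iff: "vlen l = 0 \<longleftrightarrow> l = 0"
  unfolding vlen_def rvec_def by (simp add: vec_eq_iff)

lemma vlen_tri1: "2 * vlen l \<le> vlen (l + m) + vlen (l - m)"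
proof -
  have "rvec (l + m) + rvec (l - m) = 2 *\<^sub>R rvec l" by (simp add: rvec_add rvec_diff scaleR_2 algebra_simps)
  then have "norm (2 *\<^sub>R rvec l) \<le> norm (rvec (l + m)) + norm (rvec (l - m))"
    by (metis norm_triangle_ineq)
  then show ?thesis unfolding vlen_def by simp
qed

lemma vlen_tri2: "2 * vlen m \<le> vlen (l + m) + vlen (l - m)"
proof -
  have "rvec (l + m) - rvec (l - m) = 2 *\<^sub>R rvec m" by (simp add: rvec_add rvec_diff scaleR_2 algebra_simps)
  then have "norm (2 *\<^sub>R rvec m) \<le> norm (rvec (l + m)) + norm (rvec (l - m))"
    by (metis norm_triangle_ineq4)
  then show ?thesis unfolding vlen_def by simp
qed

lemma vlen_tri3: "vlen (l + m) \<le> vlen l + vlen m" "vlen (l - m) \<le> vlen l + vlen m"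
  unfolding vlen_def rvec_add rvec_diff by (simp_all add: norm_triangle_ineq norm_triangle_ineq4)

lemma vlen_tri4: "vlen l - vlen m \<le> vlen (l + m)" "vlen l - vlen m \<le> vlen (l - m)"
proof -
  have "norm (rvec l) = norm ((rvec l + rvec m) - rvec m)" by simp
  also have "\<dots> \<le> norm (rvec l + rvec m) + norm (rvec m)" by (rule norm_triangle_ineq4)
  finally show "vlen l - vlen m \<le> vlen (l + m)" unfolding vlen_def rvec_add by linarith
  show "vlen l - vlen m \<le> vlen (l - m)" unfolding vlen_def rvec_diff by (rule norm_triangle_ineq2)
qed

lemma comp_le_vlen: "\<bar>real_of_int (l$i)\<bar> \<le> vlen l"
proof -
  have "\<bar>rvec l $ i\<bar> \<le> norm (rvec l)" by (rule component_le_norm_cart)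
  then show ?thesis unfolding vlen_def rvec_def by simp
qed

lemma vlen_comm: "vlen (m + l) = vlen (l + m)" "vlen (m - l) = vlen (l - m)"
proof -
  show "vlen (m + l) = vlen (l + m)" by (simp add: add.commute)
  have "rvec (m - l) = - rvec (l - m)" by (simp add: rvec_diff)
  then show "vlen (m - l) = vlen (l - m)" unfolding vlen_def by (metis norm_minus_cancel)
qed

definition emb :: "3 \<Rightarrow> int \<Rightarrow> int \<Rightarrow> int \<Rightarrow> int^3" where
  "emb j n b c = (\<chi> i. if i = j then n else if i = j + 1 then b else c)"

lemma emb_comp: "emb j n b c $ j = n" "emb j n b c $ (j+1) = b" "emb j n b c $ (j+2) = c"
  unfolding emb_def using three_ne[of j] by auto

lemma emb_surj: "emb j (l$j) (l$(j+1)) (l$(j+2)) = l"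
  unfolding vec_eq_iff
proof
  fix i
  from three_all[of i j] show "emb j (l$j) (l$(j+1)) (l$(j+2)) $ i = l $ i"
    by (elim disjE) (simp_all add: emb_comp)
qed

lemma emb_inj: "inj (\<lambda>(n, b, c). emb j n b c)"
proof (rule injI)
  fix x y :: "int \<times> int \<times> int"
  assume eq: "(\<lambda>(n, b, c). emb j n b c) x = (\<lambda>(n, b, c). emb j n b c) y"
  obtain n b c where x: "x = (n, b, c)" by (cases x) auto
  obtain n' b' c' where y: "y = (n', b', c')" by (cases y) auto
  have e: "emb j n b c = emb j n' b' c'" using eq x y by simp
  have "n = n'" using arg_cong[OF e, of "\<lambda>l. l$j"] by (simp add: emb_comp)
  moreover have "b = b'" using arg_cong[OF e, of "\<lambda>l. l$(j+1)"] by (simp add: emb_comp)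
  moreover have "c = c'" using arg_cong[OF e, of "\<lambda>l. l$(j+2)"] by (simp add: emb_comp)
  ultimately show "x = y" using x y by simp
qed

lemma emb_dot: "dotr (emb j n b c) m = real_of_int n * real_of_int (m$j) + (real_of_int b * real_of_int (m$(j+1)) + real_of_int c * real_of_int (m$(j+2)))"
  unfolding dotr_sum sum3_rot[of _ j] by (simp add: emb_comp)

lemma fin3:
  fixes f :: "int^3 \<Rightarrow> real" and g :: "int \<Rightarrow> int \<Rightarrow> real"
  assumes f0: "\<And>l. 0 \<le> f l"
    and inner: "\<And>b c N. finite N \<Longrightarrow> (\<Sum>n\<in>N. f (emb j n b c)) \<le> g b c"
    and outer: "\<And>B C. finite B \<Longrightarrow> finite C \<Longrightarrow> (\<Sum>b\<in>B. \<Sum>c\<in>C. g b c) \<le> K"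
    and F: "finite F"
  shows "sum f F \<le> K"
proof -
  define N where "N = (\<lambda>l. l$j) ` F"
  define B where "B = (\<lambda>l. l$(j+1)) ` F"
  define C where "C = (\<lambda>l. l$(j+2)) ` F"
  have fin: "finite N" "finite B" "finite C" using F unfolding N_def B_def C_def by auto
  define e where "e = (\<lambda>(b, c, n). emb j n b c)"
  have inje: "inj_on e (B \<times> C \<times> N)"
  proof -
    have "inj (\<lambda>(n, b, c). emb j n b c)" by (rule emb_inj)
    then show ?thesis unfolding e_def inj_on_def inj_def by auto
  qed
  have sub: "F \<subseteq> e ` (B \<times> C \<times> N)"
  proof
    fix l assume l: "l \<in> F"
    have "l = e (l$(j+1), l$(j+2), l$j)" unfolding e_def using emb_surj[of j l] by simp
    moreover have "(l$(j+1), l$(j+2), l$j) \<in> B \<times> C \<times> N" using l unfolding N_def B_def C_def by auto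
    ultimately show "l \<in> e ` (B \<times> C \<times> N)" by blast
  qed
  have "sum f F \<le> sum f (e ` (B \<times> C \<times> N))"
    by (rule sum_mono2) (use fin sub f0 in auto)
  also have "\<dots> = (\<Sum>x\<in>B \<times> C \<times> N. f (e x))" by (rule sum.reindex[OF inje, unfolded comp_def])
  also have "\<dots> = (\<Sum>x\<in>B \<times> C \<times> N. (\<lambda>(b, c, n). f (emb j n b c)) x)"
    unfolding e_def by (intro sum.cong) (auto split: prod.splits)
  also have "\<dots> = (\<Sum>b\<in>B. \<Sum>c\<in>C. \<Sum>n\<in>N. f (emb j n b c))"
    by (simp add: sum.cartesian_product)
  also have "\<dots> \<le> (\<Sum>b\<in>B. \<Sum>c\<in>C. g b c)"
    by (intro sum_mono inner fin)
  also have "\<dots> \<le> K" by (rule outer[OF fin(2,3)])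
  finally show ?thesis .
qed

lemma arctan_incr:
  fixes y s :: real
  assumes s0: "0 < s" and s1: "s \<le> 1"
  shows "s / (3 * (1 + y^2)) \<le> arctan (y + s) - arctan y"
proof -
  have "\<exists>z. y < z \<and> z < y + s \<and> arctan (y + s) - arctan y = ((y + s) - y) * inverse (1 + z^2)"
    by (rule MVT2) (use s0 in \<open>auto intro: DERIV_arctan\<close>)
  then obtain z where z: "y < z" "z < y + s" and eq: "arctan (y + s) - arctan y = s * inverse (1 + z^2)"
    by auto
  have "\<bar>z\<bar> \<le> \<bar>y\<bar> + 1" using z s1 by linarith
  then have "\<bar>z\<bar>^2 \<le> (\<bar>y\<bar> + 1)^2" by (rule power_mono) simp
  then have zz: "z^2 \<le> (\<bar>y\<bar> + 1)^2" by simp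
  have h: "(\<bar>y\<bar> + 1)^2 + (\<bar>y\<bar> - 1)^2 = 2 * y^2 + 2"
    by (simp add: power2_eq_square algebra_simps abs_mult_self_eq)
  have h2: "0 \<le> (\<bar>y\<bar> - 1)^2" by simp
  have h3: "0 \<le> y^2" by simp
  have "1 + z^2 \<le> 3 + 2 * y^2" using zz h h2 by linarith
  then have "1 + z^2 \<le> 3 + 3 * y^2" using h3 by linarith
  moreover have "3 * (1 + y^2) = 3 + 3 * y^2" by simp
  ultimately have "1 + z^2 \<le> 3 * (1 + y^2)" by linarith
  then have "s / (3 * (1 + y^2)) \<le> s / (1 + z^2)"
  proof (rule divide_left_mono)
    have p1: "0 < 1 + z^2" by (simp add: add_pos_nonneg)
    have p2: "0 < 3 * (1 + y^2)" by (simp add: add_pos_nonneg)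
    show "0 < 3 * (1 + y^2) * (1 + z^2)" using p2 p1 by (rule mult_pos_pos)
  qed (use s0 \<open>1 + z^2 \<le> 3 * (1 + y^2)\<close> in auto)
  then show ?thesis using eq by (simp add: divide_inverse)
qed

lemma L1pos:
  fixes x t :: real
  assumes t0: "0 < t" and N: "finite N"
  shows "(\<Sum>n\<in>N. 1 / (1 + (x + real_of_int n * t)^2)) \<le> 3 * pi * (1 + 1/t)"
proof -
  define s where "s = min t 1"
  have s0: "0 < s" and s1: "s \<le> 1" and st: "s \<le> t" using t0 by (auto simp: s_def)
  define G where "G = (\<lambda>n::int. (3/s) * arctan (x + real_of_int n * t))"
  have "(\<Sum>n\<in>N. 1 / (1 + (x + real_of_int n * t)^2)) \<le> 2 * ((3/s) * (pi/2))"
  proof (rule tele_int[where G = G])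
    fix n :: int
    show "G n \<le> G (n+1)" unfolding G_def using s0 t0
      by (intro mult_left_mono arctan_monotone') (auto simp: algebra_simps)
    have ab: "\<bar>arctan (x + real_of_int n * t)\<bar> \<le> pi/2" using arctan_bounded[of "x + real_of_int n * t"] by linarith
    have "(3/s) * \<bar>arctan (x + real_of_int n * t)\<bar> \<le> (3/s) * (pi/2)"
      by (rule mult_left_mono[OF ab]) (use s0 in simp)
    moreover have "\<bar>G n\<bar> = (3/s) * \<bar>arctan (x + real_of_int n * t)\<bar>" unfolding G_def abs_mult using s0 by simp
    ultimately show "\<bar>G n\<bar> \<le> (3/s) * (pi/2)" by linarith
    define y where "y = x + real_of_int n * t"
    have "s / (3 * (1 + y^2)) \<le> arctan (y + s) - arctan y" by (rule arctan_incr[OF s0 s1])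
    also have "\<dots> \<le> arctan (y + t) - arctan y" using st by (simp add: arctan_monotone')
    finally have "s / (3 * (1 + y^2)) \<le> arctan (y + t) - arctan y" .
    then have "(3/s) * (s / (3 * (1 + y^2))) \<le> (3/s) * (arctan (y + t) - arctan y)"
      by (rule mult_left_mono) (use s0 in simp)
    moreover have "(3/s) * (s / (3 * (1 + y^2))) = 1 / (1 + y^2)"
    proof -
      have "0 < 1 + y^2" by (simp add: add_pos_nonneg)
      then show ?thesis using s0 by (simp add: field_simps)
    qed
    ultimately have "1 / (1 + y^2) \<le> (3/s) * (arctan (y + t) - arctan y)" by simp
    moreover have "y + t = x + real_of_int (n+1) * t" unfolding y_def by (simp add: algebra_simps)
    ultimately show "1 / (1 + (x + real_of_int n * t)^2) \<le> G (n+1) - G n"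
      unfolding G_def y_def by (simp add: algebra_simps)
  qed (rule N)
  also have "\<dots> = 3 * pi / s" by simp
  also have "\<dots> \<le> 3 * pi * (1 + 1/t)"
  proof -
    have "1/s \<le> 1 + 1/t" using t0 s0 by (cases "t \<le> 1") (auto simp: s_def)
    then show ?thesis using pi_gt_zero by (simp add: divide_inverse mult_left_mono[of _ _ "3*pi"])
  qed
  finally show ?thesis .
qed

lemma L1:
  fixes x t :: real
  assumes t0: "t \<noteq> 0" and N: "finite N"
  shows "(\<Sum>n\<in>N. 1 / (1 + (x + real_of_int n * t)^2)) \<le> 3 * pi * (1 + 1/\<bar>t\<bar>)"
proof (cases "0 < t")
  case True then show ?thesis using L1pos[OF True N] by simp
next
  case False
  then have t1: "0 < -t" using t0 by simp
  have "(\<Sum>n\<in>N. 1 / (1 + (x + real_of_int n * t)^2)) = (\<Sum>n\<in>uminus ` N. 1 / (1 + (x + real_of_int n * (-t))^2))"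
    by (subst sum.reindex) (auto simp: inj_on_def)
  also have "\<dots> \<le> 3 * pi * (1 + 1/(-t))" by (rule L1pos[OF t1]) (use N in simp)
  finally show ?thesis using False by simp
qed

lemma Lj:
  fixes x \<mu> Q :: real
  assumes Q0: "0 < Q" and mu: "\<mu> \<noteq> 0" and N: "finite N"
  shows "(\<Sum>n\<in>N. 1 / (Q^2 + (real_of_int n * \<mu> + x)^2)) \<le> 3 * pi * (1 + Q/\<bar>\<mu>\<bar>) / Q^2"
proof -
  have eq: "1 / (Q^2 + (real_of_int n * \<mu> + x)^2) = (1 / (1 + (x/Q + real_of_int n * (\<mu>/Q))^2)) / Q^2" for n
  proof -
    define a where "a = (real_of_int n * \<mu> + x)^2"
    have a0: "0 \<le> a" unfolding a_def by simp
    have "x/Q + real_of_int n * (\<mu>/Q) = (real_of_int n * \<mu> + x)/Q" using Q0 by (simp add: field_simps)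
    then have "(x/Q + real_of_int n * (\<mu>/Q))^2 = a / Q^2" unfolding a_def by (simp add: power_divide)
    then have "1 + (x/Q + real_of_int n * (\<mu>/Q))^2 = (Q^2 + a) / Q^2" using Q0 by (simp add: add_divide_distrib)
    moreover have "0 < Q^2 + a" using Q0 a0 by (simp add: add_pos_nonneg)
    ultimately show ?thesis unfolding a_def[symmetric] using Q0 by simp
  qed
  have "(\<Sum>n\<in>N. 1 / (Q^2 + (real_of_int n * \<mu> + x)^2)) = (\<Sum>n\<in>N. 1 / (1 + (x/Q + real_of_int n * (\<mu>/Q))^2)) / Q^2"
    unfolding eq by (simp add: sum_divide_distrib)
  also have "\<dots> \<le> 3 * pi * (1 + 1/\<bar>\<mu>/Q\<bar>) / Q^2"
    by (rule divide_right_mono[OF L1]) (use Q0 mu N in auto)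
  also have "\<dots> = 3 * pi * (1 + Q/\<bar>\<mu>\<bar>) / Q^2" using Q0 by simp
  finally show ?thesis .
qed

definition K1 :: "real \<Rightarrow> real" where
  "K1 t = 2 * (2 powr t / (t - 1)) * (1/2) powr (1 - t)"

lemma K1_pos: "1 < t \<Longrightarrow> 0 < K1 t" unfolding K1_def by simp

lemma P1pos:
  fixes t A :: real
  assumes t1: "1 < t" and A1: "1 \<le> A" and N: "finite N" and NA: "\<And>n. n \<in> N \<Longrightarrow> A < real_of_int n"
  shows "(\<Sum>n\<in>N. (real_of_int n) powr (-t)) \<le> K1 t * A powr (1 - t)"
proof -
  define a where "a = real_of_int \<lfloor>A\<rfloor>"
  have a1: "1 \<le> a" using A1 unfolding a_def by simp
  have aA: "a \<le> A" unfolding a_def by simp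
  have a2: "A/2 \<le> a" using A1 a1 unfolding a_def by linarith
  define c0 where "c0 = 2 powr t / (t - 1)"
  have c0: "0 < c0" using t1 unfolding c0_def by simp
  define G where "G = (\<lambda>n::int. - c0 * (max (real_of_int n) a) powr (1 - t))"
  have "(\<Sum>n\<in>N. (real_of_int n) powr (-t)) \<le> 2 * (c0 * a powr (1 - t))"
  proof (rule tele_int[where G = G, OF _ _ N])
    fix n :: int
    have m0: "0 < max (real_of_int n) a" using a1 by linarith
    have "max (real_of_int (n + 1)) a powr (1 - t) \<le> max (real_of_int n) a powr (1 - t)"
      by (rule powr_mono2') (use t1 m0 in auto)
    then show "G n \<le> G (n + 1)" unfolding G_def using c0 by (simp add: mult_left_mono)
    have "max (real_of_int n) a powr (1 - t) \<le> a powr (1 - t)"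
      by (rule powr_mono2') (use t1 a1 in auto)
    moreover have "0 \<le> max (real_of_int n) a powr (1 - t)" by simp
    ultimately show "\<bar>G n\<bar> \<le> c0 * a powr (1 - t)" unfolding G_def using c0
      by (simp add: abs_mult mult_left_mono)
  next
    fix n :: int assume nN: "n \<in> N"
    have nA: "A < real_of_int n" by (rule NA[OF nN])
    have "\<lfloor>A\<rfloor> < n" using nA by linarith
    then have na: "a + 1 \<le> real_of_int n" unfolding a_def by linarith
    define x where "x = real_of_int n"
    have x0: "0 < x" using na a1 unfolding x_def by linarith
    have "\<exists>z. x < z \<and> z < x + 1 \<and> (x + 1) powr (1 - t) - x powr (1 - t) = ((x + 1) - x) * ((1 - t) * z powr (1 - t - 1))"
    proof (rule MVT2)
      fix y assume "x \<le> y" "y \<le> x + 1"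
      then have "0 < y" using x0 by linarith
      then show "((\<lambda>a. a powr (1 - t)) has_real_derivative (1 - t) * y powr (1 - t - 1)) (at y)"
        by (rule has_real_derivative_powr)
    qed simp
    then obtain z where z: "x < z" "z < x + 1" and eq: "(x + 1) powr (1 - t) - x powr (1 - t) = (1 - t) * z powr (-t)"
      by auto
    have "(x + 1) powr (-t) \<le> z powr (-t)"
      by (rule powr_mono2') (use t1 x0 z in auto)
    moreover have "(2 * x) powr (-t) \<le> (x + 1) powr (-t)"
      by (rule powr_mono2') (use t1 x0 na a1 x_def in auto)
    moreover have "(2 * x) powr (-t) = 2 powr (-t) * x powr (-t)" using x0 by (simp add: powr_mult)
    ultimately have zb: "2 powr (-t) * x powr (-t) \<le> z powr (-t)" by linarith
    have "G (n + 1) - G n = c0 * (x powr (1 - t) - (x + 1) powr (1 - t))"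
    proof -
      have "max (real_of_int (n+1)) a = x + 1" "max (real_of_int n) a = x" using na unfolding x_def by auto
      then show ?thesis unfolding G_def by (simp add: algebra_simps)
    qed
    also have "\<dots> = c0 * (t - 1) * z powr (-t)"
    proof -
      have m: "(t - 1) * z powr (-t) = - ((1 - t) * z powr (-t))" by (simp add: algebra_simps)
      have "x powr (1 - t) - (x + 1) powr (1 - t) = (t - 1) * z powr (-t)" using eq m by linarith
      then show ?thesis by (simp only: mult.assoc)
    qed
    also have "\<dots> = 2 powr t * z powr (-t)" unfolding c0_def using t1 by simp
    also have "\<dots> \<ge> 2 powr t * (2 powr (-t) * x powr (-t))"
      by (rule mult_left_mono[OF zb]) simp
    finally have "2 powr t * (2 powr (-t) * x powr (-t)) \<le> G (n + 1) - G n" .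
    moreover have "2 powr t * (2 powr (-t) * x powr (-t)) = x powr (-t)"
      by (simp add: powr_minus field_simps)
    ultimately show "real_of_int n powr - t \<le> G (n + 1) - G n" unfolding x_def by simp
  qed
  also have "\<dots> \<le> 2 * (c0 * (A/2) powr (1 - t))"
  proof -
    have "a powr (1 - t) \<le> (A/2) powr (1 - t)"
      by (rule powr_mono2') (use t1 A1 a2 in auto)
    then show ?thesis using c0 by simp
  qed
  also have "\<dots> = K1 t * A powr (1 - t)"
    unfolding K1_def c0_def using A1 by (simp add: powr_mult[symmetric])
  finally show ?thesis .
qed

definition K2 :: "real \<Rightarrow> real" where "K2 t = 3 + 2 * K1 t"

lemma P1:
  fixes t A :: real
  assumes t1: "1 < t" and A1: "1 \<le> A" and N: "finite N"
  shows "(\<Sum>n\<in>N. (max A \<bar>real_of_int n\<bar>) powr (-t)) \<le> K2 t * A powr (1 - t)"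
proof -
  define N1 where "N1 = {n \<in> N. \<bar>real_of_int n\<bar> \<le> A}"
  define Np where "Np = {n \<in> N. A < real_of_int n}"
  define Nm where "Nm = {n \<in> N. real_of_int n < - A}"
  have fins: "finite N1" "finite Np" "finite Nm" using N unfolding N1_def Np_def Nm_def by auto
  have pt: "(max A \<bar>real_of_int n\<bar>) powr (-t) =
      (if \<bar>real_of_int n\<bar> \<le> A then A powr (-t) else 0)
    + (if A < real_of_int n then (real_of_int n) powr (-t) else 0)
    + (if real_of_int n < - A then (real_of_int (-n)) powr (-t) else 0)" for n
    using A1 by (auto simp: max_def abs_if)
  have e1: "(\<Sum>n\<in>N. if \<bar>real_of_int n\<bar> \<le> A then A powr (-t) else 0) = (\<Sum>n\<in>N1. A powr (-t))"
    unfolding N1_def by (rule sum.inter_filter[OF N, symmetric])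
  have e2: "(\<Sum>n\<in>N. if A < real_of_int n then (real_of_int n) powr (-t) else 0) = (\<Sum>n\<in>Np. (real_of_int n) powr (-t))"
    unfolding Np_def by (rule sum.inter_filter[OF N, symmetric])
  have e3: "(\<Sum>n\<in>N. if real_of_int n < - A then (real_of_int (-n)) powr (-t) else 0) = (\<Sum>n\<in>Nm. (real_of_int (-n)) powr (-t))"
    unfolding Nm_def by (rule sum.inter_filter[OF N, symmetric])
  have "(\<Sum>n\<in>N. (max A \<bar>real_of_int n\<bar>) powr (-t)) =
      (\<Sum>n\<in>N. (if \<bar>real_of_int n\<bar> \<le> A then A powr (-t) else 0)
    + (if A < real_of_int n then (real_of_int n) powr (-t) else 0)
    + (if real_of_int n < - A then (real_of_int (-n)) powr (-t) else 0))"
    by (rule sum.cong[OF refl]) (rule pt)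
  also have "\<dots> = (\<Sum>n\<in>N1. A powr (-t)) + (\<Sum>n\<in>Np. (real_of_int n) powr (-t)) + (\<Sum>n\<in>Nm. (real_of_int (-n)) powr (-t))"
    by (simp only: sum.distrib e1 e2 e3)
  also have "(\<Sum>n\<in>Nm. (real_of_int (-n)) powr (-t)) = (\<Sum>n\<in>uminus ` Nm. (real_of_int n) powr (-t))"
    by (subst sum.reindex) (auto simp: inj_on_def)
  also have "\<dots> \<le> K1 t * A powr (1 - t)"
    by (rule P1pos[OF t1 A1]) (use fins in \<open>auto simp: Nm_def\<close>)
  also have "(\<Sum>n\<in>Np. (real_of_int n) powr (-t)) \<le> K1 t * A powr (1 - t)"
    by (rule P1pos[OF t1 A1]) (use fins in \<open>auto simp: Np_def\<close>)
  also have "(\<Sum>n\<in>N1. A powr (-t)) \<le> 3 * A powr (1 - t)"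
  proof -
    have sub: "N1 \<subseteq> {-\<lfloor>A\<rfloor>..\<lfloor>A\<rfloor>}"
    proof
      fix n assume "n \<in> N1"
      then have "\<bar>real_of_int n\<bar> \<le> A" unfolding N1_def by simp
      then have "\<bar>n\<bar> \<le> \<lfloor>A\<rfloor>" by (simp add: le_floor_iff)
      then show "n \<in> {-\<lfloor>A\<rfloor>..\<lfloor>A\<rfloor>}" by (auto simp: abs_le_iff)
    qed
    have "card N1 \<le> card {-\<lfloor>A\<rfloor>..\<lfloor>A\<rfloor>}" by (rule card_mono) (use sub in auto)
    also have "\<dots> = nat (2 * \<lfloor>A\<rfloor> + 1)" by simp
    finally have "real (card N1) \<le> real_of_int (2 * \<lfloor>A\<rfloor> + 1)" using A1 by linarith
    also have "\<dots> \<le> 3 * A" using A1 by linarith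
    finally have c: "real (card N1) \<le> 3 * A" .
    have "(\<Sum>n\<in>N1. A powr (-t)) = real (card N1) * A powr (-t)" by simp
    also have "\<dots> \<le> (3 * A) * A powr (-t)" by (rule mult_right_mono[OF c]) simp
    also have "\<dots> = 3 * A powr (1 - t)" using A1 by (simp add: powr_diff powr_minus field_simps)
    finally show ?thesis .
  qed
  ultimately have "(\<Sum>n\<in>N. (max A \<bar>real_of_int n\<bar>) powr (-t)) \<le> 3 * A powr (1 - t) + K1 t * A powr (1 - t) + K1 t * A powr (1 - t)"
    by linarith
  also have "\<dots> = K2 t * A powr (1 - t)" unfolding K2_def by (simp add: algebra_simps)
  finally show ?thesis .
qed

lemma K2_pos: "1 < t \<Longrightarrow> 0 < K2 t" unfolding K2_def using K1_pos[of t] by simp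

lemma Q2:
  fixes s A :: real
  assumes s2: "2 < s" and A1: "1 \<le> A" and B: "finite B" and C: "finite C"
  shows "(\<Sum>b\<in>B. \<Sum>c\<in>C. (max A (max \<bar>real_of_int b\<bar> \<bar>real_of_int c\<bar>)) powr (-s))
           \<le> (K2 (s/2))^2 * A powr (2 - s)"
proof -
  define h where "h = (\<lambda>n::int. (max A \<bar>real_of_int n\<bar>) powr (-(s/2)))"
  have pt: "(max A (max \<bar>real_of_int b\<bar> \<bar>real_of_int c\<bar>)) powr (-s) \<le> h b * h c" for b c
  proof -
    define Q where "Q = max A (max \<bar>real_of_int b\<bar> \<bar>real_of_int c\<bar>)"
    have Q0: "0 < Q" using A1 unfolding Q_def by linarith
    have "Q powr (-s) = Q powr (-(s/2)) * Q powr (-(s/2))" by (simp add: powr_add[symmetric])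
    also have "\<dots> \<le> h b * h c" unfolding h_def
    proof (rule mult_mono)
      show "Q powr (-(s/2)) \<le> max A \<bar>real_of_int b\<bar> powr (-(s/2))"
        by (rule powr_mono2') (use s2 A1 in \<open>auto simp: Q_def\<close>)
      show "Q powr (-(s/2)) \<le> max A \<bar>real_of_int c\<bar> powr (-(s/2))"
        by (rule powr_mono2') (use s2 A1 in \<open>auto simp: Q_def\<close>)
    qed simp_all
    finally show ?thesis unfolding Q_def .
  qed
  have "(\<Sum>b\<in>B. \<Sum>c\<in>C. (max A (max \<bar>real_of_int b\<bar> \<bar>real_of_int c\<bar>)) powr (-s))
      \<le> (\<Sum>b\<in>B. \<Sum>c\<in>C. h b * h c)"
    by (intro sum_mono pt)
  also have "\<dots> = (\<Sum>b\<in>B. h b) * (\<Sum>c\<in>C. h c)" by (simp add: sum_product)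
  also have "\<dots> \<le> (K2 (s/2) * A powr (1 - s/2)) * (K2 (s/2) * A powr (1 - s/2))"
  proof (rule mult_mono)
    show "(\<Sum>b\<in>B. h b) \<le> K2 (s/2) * A powr (1 - s/2)" unfolding h_def by (rule P1) (use s2 A1 B in auto)
    show "(\<Sum>c\<in>C. h c) \<le> K2 (s/2) * A powr (1 - s/2)" unfolding h_def by (rule P1) (use s2 A1 C in auto)
    show "0 \<le> K2 (s/2) * A powr (1 - s/2)" using K2_pos[of "s/2"] s2 by simp
    show "0 \<le> (\<Sum>c\<in>C. h c)" unfolding h_def by (intro sum_nonneg) simp
  qed
  also have "\<dots> = (K2 (s/2))^2 * A powr (2 - s)"
    using A1 by (simp add: power2_eq_square powr_add[symmetric] algebra_simps)
  finally show ?thesis .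
qed

lemma sqdiff: "(U - V)^2 * (U + V)^2 = (U^2 - V^2)^2" for U V :: real
  by (simp add: power2_eq_square algebra_simps)

lemma aux16: "L \<noteq> 0 \<Longrightarrow> X \<noteq> 0 \<Longrightarrow> (a * L^2) / (L^2 * X / 16) = 16 * a / (X::real)"
  by (simp add: field_simps)

lemma quot_le: fixes w w' P P' :: real
  assumes "0 \<le> w" "w \<le> w'" "0 < P'" "P' \<le> P" shows "w / P \<le> w' / P'"
  using assms by (meson frac_le order.trans)

lemma UVlow:
  fixes U V D S :: real
  assumes UV: "U^2 - V^2 = 4 * D" and S0: "0 < S" and S: "(U + V)^2 \<le> S"
  shows "16 * D^2 / S \<le> (U - V)^2"
proof -
  have e: "(U - V)^2 * (U + V)^2 = 16 * D^2" using sqdiff[of U V] UV by (simp add: power2_eq_square)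
  show ?thesis
  proof (cases "(U + V)^2 = 0")
    case True then have "D^2 = 0" using e by simp
    then show ?thesis by simp
  next
    case False
    then have p: "0 < (U + V)^2" by simp
    have "16 * D^2 / S \<le> 16 * D^2 / (U + V)^2"
      by (rule divide_left_mono) (use S p S0 in \<open>auto intro: mult_pos_pos\<close>)
    also have "\<dots> = (U - V)^2" using e p by (simp add: field_simps)
    finally show ?thesis .
  qed
qed

lemma case_far:
  fixes L M U V D Q w \<delta> :: real
  assumes M1: "1 \<le> M" and LM: "2 * M < L" and d0: "0 \<le> \<delta>" and d1: "\<delta> < 1"
    and U0: "0 \<le> U" and V0: "0 \<le> V"
    and UV: "U^2 - V^2 = 4 * D" and t3: "U + V \<le> 2 * (L + M)"
    and t4: "L - M \<le> U" "L - M \<le> V"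
    and Q1: "2 * M \<le> Q" and QL: "Q \<le> L" and w: "w = L powr \<delta>"
  shows "w / ((1 + U^2) * (1 + V^2) * (1 + (U - V)^2)) \<le> 16 * Q powr (\<delta> - 2) / (Q^2 + D^2)"
proof -
  have L0: "0 < L" using LM M1 by linarith
  have Q0: "0 < Q" using Q1 M1 by linarith
  have "L/2 \<le> U" "L/2 \<le> V" using t4 LM by linarith+
  then have u2: "L^2/4 \<le> 1 + U^2" and v2: "L^2/4 \<le> 1 + V^2"
    using power_mono[of "L/2" U 2] power_mono[of "L/2" V 2] L0 by (auto simp: power_divide)
  have "(U + V)^2 \<le> (4 * L)^2" by (rule power_mono) (use t3 LM U0 V0 in auto)
  then have "16 * D^2 / (4 * L)^2 \<le> (U - V)^2" by (intro UVlow[OF UV]) (use L0 in auto)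
  then have uv: "D^2 / L^2 \<le> (U - V)^2" by (simp add: power_mult_distrib)
  define P' where "P' = (L^2/4) * (L^2/4) * (1 + D^2 / L^2)"
  have P'0: "0 < P'" unfolding P'_def using L0 by (simp add: add_pos_nonneg)
  have P'le: "P' \<le> (1 + U^2) * (1 + V^2) * (1 + (U - V)^2)"
    unfolding P'_def using u2 v2 uv L0 by (intro mult_mono) (auto simp: add_pos_nonneg)
  have "w / ((1 + U^2) * (1 + V^2) * (1 + (U - V)^2)) \<le> w / P'"
    by (rule quot_le[OF _ order.refl P'0 P'le]) (simp add: w)
  also have "\<dots> = 16 * L powr (\<delta> - 2) / (L^2 + D^2)"
  proof -
    have e1: "L powr \<delta> = L powr (\<delta> - 2) * L^2" using L0 by (simp add: powr_diff powr_realpow[of L 2, simplified] field_simps)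
    have e2: "P' = L^2 * (L^2 + D^2) / 16" unfolding P'_def using L0 by (simp add: field_simps power2_eq_square)
    have pos: "0 < L^2 + D^2" using L0 by (simp add: add_pos_nonneg)
    have "w / P' = (L powr (\<delta> - 2) * L^2) / (L^2 * (L^2 + D^2) / 16)" by (simp only: w e1 e2)
    also have "\<dots> = 16 * L powr (\<delta> - 2) / (L^2 + D^2)" using L0 pos by (intro aux16) auto
    finally show ?thesis .
  qed
  also have "\<dots> \<le> 16 * Q powr (\<delta> - 2) / (Q^2 + D^2)"
  proof (rule quot_le)
    show "0 \<le> 16 * L powr (\<delta> - 2)" by simp
    have "L powr (\<delta> - 2) \<le> Q powr (\<delta> - 2)" by (rule powr_mono2') (use d1 Q0 QL in auto)
    then show "16 * L powr (\<delta> - 2) \<le> 16 * Q powr (\<delta> - 2)" by simp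
    show "0 < Q^2 + D^2" using Q0 by (simp add: add_pos_nonneg)
    have "Q^2 \<le> L^2" by (rule power_mono) (use QL Q0 in auto)
    then show "Q^2 + D^2 \<le> L^2 + D^2" by simp
  qed
  finally show ?thesis .
qed

lemma aux_M4: "M \<noteq> 0 \<Longrightarrow> X \<noteq> 0 \<Longrightarrow> (2 * (a * M^4)) / (M^2/4 * (M^2/4) * X) = 32 * a / (X::real)"
  by (simp add: field_simps power2_eq_square power4_eq_xxxx)

lemma aux_M4b: "M \<noteq> 0 \<Longrightarrow> X \<noteq> 0 \<Longrightarrow> (2 * (a * M^4)) / (M^2 * X * (M^2/9)) = 18 * a / (X::real)"
  by (simp add: field_simps power2_eq_square power4_eq_xxxx)

lemma Mpow4: "0 < M \<Longrightarrow> M powr \<delta> = M powr (\<delta> - 4) * M^4" for M :: real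
  by (simp add: powr_diff powr_realpow[of M 4, simplified] field_simps)

lemma case_mid:
  fixes L M U V D w \<delta> :: real
  assumes M1: "1 \<le> M" and LM: "L \<le> 2 * M" and L0: "0 \<le> L"
    and U0: "0 \<le> U" and V0: "0 \<le> V"
    and UV: "U^2 - V^2 = 4 * D" and t3: "U + V \<le> 2 * (L + M)"
    and Um: "M/2 \<le> U" and Vm: "M/2 \<le> V" and w0: "0 \<le> w" and wM: "w \<le> 2 * M powr \<delta>"
  shows "w / ((1 + U^2) * (1 + V^2) * (1 + (U - V)^2)) \<le> 32 * M powr (\<delta> - 4) / (1 + (D/(2*M))^2)"
proof -
  have M0: "0 < M" using M1 by linarith
  have u2: "M^2/4 \<le> 1 + U^2" and v2: "M^2/4 \<le> 1 + V^2"
    using power_mono[of "M/2" U 2] power_mono[of "M/2" V 2] M0 Um Vm by (auto simp: power_divide)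
  have "(U + V)^2 \<le> (6 * M)^2" by (rule power_mono) (use t3 LM U0 V0 in auto)
  then have h: "16 * D^2 / (6 * M)^2 \<le> (U - V)^2" by (intro UVlow[OF UV]) (use M0 in auto)
  have "(D/(2*M))^2 \<le> 16 * D^2 / (6 * M)^2"
    using M0 by (simp add: power_divide power_mult_distrib field_simps)
  then have uv: "(D/(2*M))^2 \<le> (U - V)^2" using h by linarith
  define X where "X = 1 + (D/(2*M))^2"
  have X0: "0 < X" unfolding X_def by (simp add: add_pos_nonneg)
  define P' where "P' = (M^2/4) * (M^2/4) * X"
  have P'0: "0 < P'" unfolding P'_def using M0 X0 by simp
  have P'le: "P' \<le> (1 + U^2) * (1 + V^2) * (1 + (U - V)^2)"
    unfolding P'_def X_def using u2 v2 uv M0 by (intro mult_mono) (auto simp: add_pos_nonneg)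
  have "w / ((1 + U^2) * (1 + V^2) * (1 + (U - V)^2)) \<le> (2 * M powr \<delta>) / P'"
    by (rule quot_le[OF w0 wM P'0 P'le])
  also have "\<dots> = 32 * M powr (\<delta> - 4) / X"
    unfolding P'_def Mpow4[OF M0, of \<delta>] using M0 X0 by (intro aux_M4) auto
  finally show ?thesis unfolding X_def .
qed

lemma case_near:
  fixes L M U V D w \<delta> vj :: real
  assumes M1: "1 \<le> M" and LM: "L \<le> 2 * M" and L0: "0 \<le> L"
    and U0: "0 \<le> U" and V0: "0 \<le> V"
    and UV: "U^2 - V^2 = 4 * D" and t2: "2 * M \<le> U + V" and t3: "U + V \<le> 2 * (L + M)"
    and Vs: "V < M/2" and w0: "0 \<le> w" and wM: "w \<le> 2 * M powr \<delta>" and vj: "vj^2 \<le> V^2"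
  shows "w / ((1 + U^2) * (1 + V^2) * (1 + (U - V)^2)) \<le> 32 * M powr (\<delta> - 4) / (1 + vj^2)"
proof -
  have M0: "0 < M" using M1 by linarith
  have U32: "3/2 * M \<le> U" using t2 Vs by linarith
  have "(3/2 * M)^2 \<le> U^2" by (rule power_mono[OF U32]) (use M0 in simp)
  moreover have "(3/2 * M)^2 = 9/4 * M^2" by (simp add: field_simps power2_eq_square)
  ultimately have U2: "9/4 * M^2 \<le> U^2" by linarith
  have "V^2 \<le> (M/2)^2" by (rule power_mono) (use Vs V0 in auto)
  then have V2: "V^2 \<le> M^2/4" by (simp add: power_divide)
  have u2: "M^2 \<le> 1 + U^2" using U2 M0 by (simp add: power2_eq_square) (smt (verit) mult_nonneg_nonneg)
  have D2: "M^2/2 \<le> D" using UV U2 V2 by linarith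
  have "(M^2/2)^2 \<le> D^2" by (rule power_mono[OF D2]) simp
  then have D4: "M^4/4 \<le> D^2" by (simp add: power_divide power2_eq_square power4_eq_xxxx)
  have "(U + V)^2 \<le> (6 * M)^2" by (rule power_mono) (use t3 LM U0 V0 in auto)
  then have h: "16 * D^2 / (6 * M)^2 \<le> (U - V)^2" by (intro UVlow[OF UV]) (use M0 in auto)
  have "M^2/9 \<le> 16 * D^2 / (6 * M)^2"
  proof -
    have "16 * (M^4/4) / (6 * M)^2 \<le> 16 * D^2 / (6 * M)^2"
      by (rule divide_right_mono) (use D4 in auto)
    moreover have "16 * (M^4/4) / (6 * M)^2 = M^2/9" using M0
      by (simp add: power2_eq_square power4_eq_xxxx field_simps)
    ultimately show ?thesis by simp
  qed
  then have uv: "M^2/9 \<le> 1 + (U - V)^2" using h by (smt (verit) zero_le_power2)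
  define X where "X = 1 + vj^2"
  have X0: "0 < X" unfolding X_def by (simp add: add_pos_nonneg)
  have XV: "X \<le> 1 + V^2" unfolding X_def using vj by simp
  define P' where "P' = M^2 * X * (M^2/9)"
  have P'0: "0 < P'" unfolding P'_def using M0 X0 by simp
  have P'le: "P' \<le> (1 + U^2) * (1 + V^2) * (1 + (U - V)^2)"
    unfolding P'_def using u2 XV uv M0 X0 by (intro mult_mono) auto
  have "w / ((1 + U^2) * (1 + V^2) * (1 + (U - V)^2)) \<le> (2 * M powr \<delta>) / P'"
    by (rule quot_le[OF w0 wM P'0 P'le])
  also have "\<dots> = 18 * M powr (\<delta> - 4) / X"
    unfolding P'_def Mpow4[OF M0, of \<delta>] using M0 X0 by (intro aux_M4b) auto
  also have "\<dots> \<le> 32 * M powr (\<delta> - 4) / X"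
    using X0 by (intro divide_right_mono) auto
  finally show ?thesis unfolding X_def .
qed

lemma rpow_nonneg: "0 \<le> rpow x d" unfolding rpow_def by simp

lemma jbr_prod_sq: "(jbr U * jbr V * jbr W)^2 = (1 + U^2) * (1 + V^2) * (1 + W^2)"
  by (simp add: power_mult_distrib jbr_sq)

lemma pt_lattice:
  fixes l m :: "int^3" and j :: 3 and \<delta> :: real
  assumes M1': "1 \<le> vlen m" and d0: "0 \<le> \<delta>" and d1: "\<delta> < 1"
    and M_def: "M = vlen m" and D_def: "D = dotr l m"
    and Bq_def: "Bq = max \<bar>real_of_int (l$(j+1))\<bar> \<bar>real_of_int (l$(j+2))\<bar>"
    and Q_def: "Q = max (2 * M) Bq"
  shows "rpow (vlen l) \<delta> / (jbr (vlen (l + m)) * jbr (vlen (l - m)) * jbr (vlen (l + m) - vlen (l - m)))^2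
     \<le> 16 * Q powr (\<delta> - 2) / (Q^2 + D^2)
       + (if Bq \<le> 2 * M then 32 * M powr (\<delta> - 4) * (1 / (1 + (D/(2*M))^2)
            + 1 / (1 + (real_of_int (l$j) - real_of_int (m$j))^2)
            + 1 / (1 + (real_of_int (l$j) + real_of_int (m$j))^2)) else 0)"
proof -
  define L where "L = vlen l"
  define U where "U = vlen (l + m)"
  define V where "V = vlen (l - m)"
  define w where "w = rpow L \<delta>"
  define vj where "vj = real_of_int (l$j) - real_of_int (m$j)"
  define uj where "uj = real_of_int (l$j) + real_of_int (m$j)"
  have M1: "1 \<le> M" using M1' unfolding M_def .
  have M0: "0 < M" using M1 by linarith
  have L0: "0 \<le> L" "0 \<le> U" "0 \<le> V" unfolding L_def U_def V_def by (simp_all add: vlen_nonneg)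
  have U2: "U^2 = L^2 + 2 * D + M^2" unfolding U_def L_def M_def D_def by (rule vlen_plus_sq)
  have V2: "V^2 = L^2 - 2 * D + M^2" unfolding V_def L_def M_def D_def by (rule vlen_minus_sq)
  have UV: "U^2 - V^2 = 4 * D" using U2 V2 by simp
  have VU: "V^2 - U^2 = 4 * (-D)" using U2 V2 by simp
  have t1: "2 * L \<le> U + V" unfolding L_def U_def V_def by (rule vlen_tri1)
  have t2: "2 * M \<le> U + V" unfolding M_def U_def V_def by (rule vlen_tri2)
  have t3: "U + V \<le> 2 * (L + M)" using add_mono[OF vlen_tri3(1)[of l m] vlen_tri3(2)[of l m]]
    unfolding L_def U_def V_def M_def by (simp add: algebra_simps)
  have t4: "L - M \<le> U" "L - M \<le> V" using vlen_tri4[of l m] unfolding L_def U_def V_def M_def by auto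
  have BqL: "Bq \<le> L" unfolding Bq_def L_def using comp_le_vlen[of l] by simp
  have Bq0: "0 \<le> Bq" unfolding Bq_def by simp
  have vj2: "vj^2 \<le> V^2"
  proof -
    have "\<bar>vj\<bar> \<le> V" unfolding vj_def V_def using comp_le_vlen[of "l - m" j] by simp
    then have "\<bar>vj\<bar>^2 \<le> V^2" by (rule power_mono) simp
    then show ?thesis by simp
  qed
  have uj2: "uj^2 \<le> U^2"
  proof -
    have "\<bar>uj\<bar> \<le> U" unfolding uj_def U_def using comp_le_vlen[of "l + m" j] by simp
    then have "\<bar>uj\<bar>^2 \<le> U^2" by (rule power_mono) simp
    then show ?thesis by simp
  qed
  have w0: "0 \<le> w" unfolding w_def by (rule rpow_nonneg)
  have prodsq: "(jbr U * jbr V * jbr (U - V))^2 = (1 + U^2) * (1 + V^2) * (1 + (U - V)^2)"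
    by (rule jbr_prod_sq)
  define T where "T = w / ((1 + U^2) * (1 + V^2) * (1 + (U - V)^2))"
  have lhs: "rpow (vlen l) \<delta> / (jbr (vlen (l + m)) * jbr (vlen (l - m)) * jbr (vlen (l + m) - vlen (l - m)))^2 = T"
  proof -
    have "rpow (vlen l) \<delta> / (jbr (vlen (l + m)) * jbr (vlen (l - m)) * jbr (vlen (l + m) - vlen (l - m)))^2
        = w / (jbr U * jbr V * jbr (U - V))^2" unfolding w_def L_def U_def V_def by (rule refl)
    also have "\<dots> = T" unfolding T_def prodsq by (rule refl)
    finally show ?thesis .
  qed
  define R1 where "R1 = 16 * Q powr (\<delta> - 2) / (Q^2 + D^2)"
  define X where "X = 1 / (1 + (D/(2*M))^2) + 1 / (1 + vj^2) + 1 / (1 + uj^2)"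
  have R1_0: "0 \<le> R1" unfolding R1_def by simp
  have X0s: "0 \<le> 1 / (1 + (D/(2*M))^2)" "0 \<le> 1 / (1 + vj^2)" "0 \<le> 1 / (1 + uj^2)"
    by (simp_all add: add_nonneg_nonneg)
  have goal: "T \<le> R1 + (if Bq \<le> 2 * M then 32 * M powr (\<delta> - 4) * X else 0)"
  proof (cases "2 * M < L")
    case True
    have wL: "w = L powr \<delta>" unfolding w_def rpow_def using True M0 by simp
    have QL: "Q \<le> L" unfolding Q_def using True BqL by simp
    have Q2: "2 * M \<le> Q" unfolding Q_def by simp
    have "T \<le> R1" unfolding T_def R1_def
      by (rule case_far[OF M1 True d0 d1 L0(2) L0(3) UV t3 t4(1) t4(2) Q2 QL wL])
    moreover have "0 \<le> (if Bq \<le> 2 * M then 32 * M powr (\<delta> - 4) * X else 0)"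
      unfolding X_def using X0s by simp
    ultimately show ?thesis by linarith
  next
    case False
    then have LM: "L \<le> 2 * M" by simp
    have Bq2: "Bq \<le> 2 * M" using BqL LM by simp
    have wM: "w \<le> 2 * M powr \<delta>"
    proof (cases "L = 0")
      case True
      have "1 \<le> M powr \<delta>" using M1 d0 by (simp add: ge_one_powr_ge_zero)
      moreover have "rpow L \<delta> \<le> 1" using True unfolding rpow_def by simp
      ultimately show ?thesis unfolding w_def by linarith
    next
      case False
      then have Lp: "0 < L" using L0 by simp
      have "L powr \<delta> \<le> (2 * M) powr \<delta>" by (rule powr_mono2) (use d0 Lp LM in auto)
      also have "\<dots> = 2 powr \<delta> * M powr \<delta>" using M0 by (simp add: powr_mult)
      also have "\<dots> \<le> 2 * M powr \<delta>"
      proof -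
        have "2 powr \<delta> \<le> 2 powr (1::real)" by (rule powr_mono) (use d1 in auto)
        then show ?thesis by (simp add: mult_right_mono)
      qed
      finally show ?thesis unfolding w_def rpow_def using False by simp
    qed
    have Mp: "0 \<le> 32 * M powr (\<delta> - 4)" by simp
    have fin: "32 * M powr (\<delta> - 4) / Y \<le> 32 * M powr (\<delta> - 4) * X" if "1 / Y \<le> X" for Y
    proof -
      have "32 * M powr (\<delta> - 4) * (1 / Y) \<le> 32 * M powr (\<delta> - 4) * X" by (rule mult_left_mono[OF that Mp])
      then show ?thesis by simp
    qed
    have "T \<le> 32 * M powr (\<delta> - 4) * X"
    proof (cases "M/2 \<le> U \<and> M/2 \<le> V")
      case True
      then have Um: "M/2 \<le> U" and Vm: "M/2 \<le> V" by auto
      have "T \<le> 32 * M powr (\<delta> - 4) / (1 + (D/(2*M))^2)" unfolding T_def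
        by (rule case_mid[OF M1 LM L0(1) L0(2) L0(3) UV t3 Um Vm w0 wM])
      also have "\<dots> \<le> 32 * M powr (\<delta> - 4) * X"
        by (rule fin) (use X0s in \<open>unfold X_def, linarith\<close>)
      finally show ?thesis .
    next
      case False
      then consider "V < M/2" | "U < M/2" by linarith
      then show ?thesis
      proof cases
        case 1
        have "T \<le> 32 * M powr (\<delta> - 4) / (1 + vj^2)" unfolding T_def
          by (rule case_near[OF M1 LM L0(1) L0(2) L0(3) UV t2 t3 1 w0 wM vj2])
        also have "\<dots> \<le> 32 * M powr (\<delta> - 4) * X"
          by (rule fin) (use X0s in \<open>unfold X_def, linarith\<close>)
        finally show ?thesis .
      next
        case 2
        have t2': "2 * M \<le> V + U" using t2 by simp
        have t3': "V + U \<le> 2 * (L + M)" using t3 by simp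
        have "T = w / ((1 + V^2) * (1 + U^2) * (1 + (V - U)^2))"
          unfolding T_def by (simp add: power2_commute mult.commute)
        also have "\<dots> \<le> 32 * M powr (\<delta> - 4) / (1 + uj^2)"
          by (rule case_near[OF M1 LM L0(1) L0(3) L0(2) VU t2' t3' 2 w0 wM uj2])
        also have "\<dots> \<le> 32 * M powr (\<delta> - 4) * X"
          by (rule fin) (use X0s in \<open>unfold X_def, linarith\<close>)
        finally show ?thesis .
      qed
    qed
    then show ?thesis using Bq2 R1_0 by simp
  qed
  show ?thesis using goal lhs unfolding R1_def X_def vj_def uj_def by simp
qed

definition K3 :: real where "K3 = 7056 * pi"

lemma inner_m:
  fixes M mj cst Bq \<delta> :: real and N :: "int set"
  assumes M1: "1 \<le> M" and mj: "M \<le> 2 * \<bar>mj\<bar>" and d0: "0 \<le> \<delta>" and d1: "\<delta> < 1"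
    and N: "finite N" and Bq0: "0 \<le> Bq"
  defines "Q \<equiv> max (2 * M) Bq"
  shows "(\<Sum>n\<in>N. 16 * Q powr (\<delta> - 2) / (Q^2 + (real_of_int n * mj + cst)^2)
       + (if Bq \<le> 2 * M then 32 * M powr (\<delta> - 4) * (1 / (1 + (cst/(2*M) + real_of_int n * (mj/(2*M)))^2)
            + 1 / (1 + (-mj + real_of_int n * 1)^2)
            + 1 / (1 + (mj + real_of_int n * 1)^2)) else 0))
     \<le> K3 * Q powr (\<delta> - 3) / M"
proof -
  have M0: "0 < M" using M1 by linarith
  have mj0: "mj \<noteq> 0" using mj M0 by auto
  have Q0: "0 < Q" "2 * M \<le> Q" unfolding Q_def using M0 by auto
  have s1: "(\<Sum>n\<in>N. 16 * Q powr (\<delta> - 2) / (Q^2 + (real_of_int n * mj + cst)^2))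
      \<le> 16 * Q powr (\<delta> - 2) * (3 * pi * (1 + Q/\<bar>mj\<bar>) / Q^2)"
  proof -
    have "(\<Sum>n\<in>N. 16 * Q powr (\<delta> - 2) / (Q^2 + (real_of_int n * mj + cst)^2))
        = 16 * Q powr (\<delta> - 2) * (\<Sum>n\<in>N. 1 / (Q^2 + (real_of_int n * mj + cst)^2))"
      by (simp add: sum_distrib_left)
    also have "\<dots> \<le> 16 * Q powr (\<delta> - 2) * (3 * pi * (1 + Q/\<bar>mj\<bar>) / Q^2)"
      by (rule mult_left_mono[OF Lj[OF Q0(1) mj0 N]]) simp
    finally show ?thesis .
  qed
  have s1b: "16 * Q powr (\<delta> - 2) * (3 * pi * (1 + Q/\<bar>mj\<bar>) / Q^2) \<le> 144 * pi * Q powr (\<delta> - 3) / M"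
  proof -
    have "1 + Q/\<bar>mj\<bar> \<le> 3 * Q / M"
    proof -
      have "1 \<le> Q / M" using Q0 M0 by (simp add: field_simps)
      moreover have "Q/\<bar>mj\<bar> \<le> 2 * Q / M" using mj M0 Q0 mj0 by (simp add: field_simps mult_left_mono)
      ultimately show ?thesis by simp
    qed
    then have "16 * Q powr (\<delta> - 2) * (3 * pi * (1 + Q/\<bar>mj\<bar>) / Q^2) \<le> 16 * Q powr (\<delta> - 2) * (3 * pi * (3 * Q / M) / Q^2)"
      using Q0 by (intro mult_left_mono divide_right_mono) auto
    also have "\<dots> = 144 * pi * (Q powr (\<delta> - 2) / Q) / M" using Q0 M0 by (simp add: field_simps power2_eq_square)
    also have "Q powr (\<delta> - 2) / Q = Q powr (\<delta> - 3)" using Q0 by (simp add: powr_diff field_simps power2_eq_square power3_eq_cube)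
    finally show ?thesis by simp
  qed
  have s2: "(\<Sum>n\<in>N. (if Bq \<le> 2 * M then 32 * M powr (\<delta> - 4) * (1 / (1 + (cst/(2*M) + real_of_int n * (mj/(2*M)))^2)
            + 1 / (1 + (-mj + real_of_int n * 1)^2)
            + 1 / (1 + (mj + real_of_int n * 1)^2)) else 0))
      \<le> 6912 * pi * Q powr (\<delta> - 3) / M"
  proof (cases "Bq \<le> 2 * M")
    case False
    then show ?thesis using Q0 M0 by simp
  next
    case True
    have QM: "Q = 2 * M" unfolding Q_def using True by simp
    have a: "(\<Sum>n\<in>N. 1 / (1 + (cst/(2*M) + real_of_int n * (mj/(2*M)))^2)) \<le> 15 * pi"
    proof -
      have "(\<Sum>n\<in>N. 1 / (1 + (cst/(2*M) + real_of_int n * (mj/(2*M)))^2)) \<le> 3 * pi * (1 + 1/\<bar>mj/(2*M)\<bar>)"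
        by (rule L1[OF _ N]) (use mj0 M0 in simp)
      also have "\<dots> \<le> 3 * pi * 5"
      proof -
        have "1/\<bar>mj/(2*M)\<bar> = 2 * M / \<bar>mj\<bar>" using M0 by simp
        also have "\<dots> \<le> 4" using mj mj0 M0 by (simp add: field_simps)
        finally show ?thesis by simp
      qed
      finally show ?thesis by simp
    qed
    have b: "(\<Sum>n\<in>N. 1 / (1 + (-mj + real_of_int n * 1)^2)) \<le> 6 * pi"
      using L1[OF _ N, of 1 "-mj"] by simp
    have c: "(\<Sum>n\<in>N. 1 / (1 + (mj + real_of_int n * 1)^2)) \<le> 6 * pi"
      using L1[OF _ N, of 1 "mj"] by simp
    have "(\<Sum>n\<in>N. (if Bq \<le> 2 * M then 32 * M powr (\<delta> - 4) * (1 / (1 + (cst/(2*M) + real_of_int n * (mj/(2*M)))^2)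
            + 1 / (1 + (-mj + real_of_int n * 1)^2)
            + 1 / (1 + (mj + real_of_int n * 1)^2)) else 0))
        = 32 * M powr (\<delta> - 4) * ((\<Sum>n\<in>N. 1 / (1 + (cst/(2*M) + real_of_int n * (mj/(2*M)))^2))
          + (\<Sum>n\<in>N. 1 / (1 + (-mj + real_of_int n * 1)^2)) + (\<Sum>n\<in>N. 1 / (1 + (mj + real_of_int n * 1)^2)))"
      by (simp only: if_P[OF True] sum.distrib[symmetric] sum_distrib_left)
    also have "\<dots> \<le> 32 * M powr (\<delta> - 4) * (27 * pi)"
      using a b c by (intro mult_left_mono) auto
    also have "\<dots> \<le> 6912 * pi * Q powr (\<delta> - 3) / M"
    proof -
      have e1: "M powr (\<delta> - 4) = M powr (\<delta> - 3) / M" using M0 by (simp add: powr_diff field_simps power3_eq_cube power4_eq_xxxx)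
      have e2: "M powr (\<delta> - 3) \<le> 8 * Q powr (\<delta> - 3)"
      proof -
        have q: "Q powr (\<delta> - 3) = 2 powr (\<delta> - 3) * M powr (\<delta> - 3)" unfolding QM using M0 by (simp add: powr_mult)
        have "1/8 \<le> 2 powr (\<delta> - 3)"
        proof -
          have "2 powr (-3::real) \<le> 2 powr (\<delta> - 3)" by (rule powr_mono) (use d0 in auto)
          moreover have "2 powr (-3::real) = 1/8" by (simp add: powr_minus powr_numeral)
          ultimately show ?thesis by simp
        qed
        then have "(1/8) * M powr (\<delta> - 3) \<le> 2 powr (\<delta> - 3) * M powr (\<delta> - 3)"
          by (rule mult_right_mono) simp
        then show ?thesis using q by linarith
      qed
      have "32 * M powr (\<delta> - 4) * (27 * pi) = 864 * pi * M powr (\<delta> - 3) / M" unfolding e1 by simp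
      also have "\<dots> \<le> 864 * pi * (8 * Q powr (\<delta> - 3)) / M"
        by (intro divide_right_mono mult_left_mono e2) (use M0 in auto)
      also have "\<dots> = 6912 * pi * Q powr (\<delta> - 3) / M" by simp
      finally show ?thesis .
    qed
    finally show ?thesis .
  qed
  have "(\<Sum>n\<in>N. 16 * Q powr (\<delta> - 2) / (Q^2 + (real_of_int n * mj + cst)^2)
       + (if Bq \<le> 2 * M then 32 * M powr (\<delta> - 4) * (1 / (1 + (cst/(2*M) + real_of_int n * (mj/(2*M)))^2)
            + 1 / (1 + (-mj + real_of_int n * 1)^2)
            + 1 / (1 + (mj + real_of_int n * 1)^2)) else 0))
     \<le> 144 * pi * Q powr (\<delta> - 3) / M + 6912 * pi * Q powr (\<delta> - 3) / M"
    unfolding sum.distrib using s1 s1b s2 by linarith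
  also have "\<dots> = K3 * Q powr (\<delta> - 3) / M" unfolding K3_def by (simp add: field_simps)
  finally show ?thesis .
qed

definition Tf :: "real \<Rightarrow> int^3 \<Rightarrow> int^3 \<Rightarrow> real" where
  "Tf \<delta> m l = rpow (vlen l) \<delta> / (jbr (vlen (l + m)) * jbr (vlen (l - m)) * jbr (vlen (l + m) - vlen (l - m)))^2"

lemma Tf_nonneg: "0 \<le> Tf \<delta> m l" unfolding Tf_def by (simp add: rpow_nonneg)

lemma big_coord:
  fixes m :: "int^3"
  obtains j where "vlen m \<le> 2 * \<bar>real_of_int (m$j)\<bar>"
proof -
  define f where "f = (\<lambda>i. \<bar>real_of_int (m$i)\<bar>)"
  have fin: "finite (range f)" by simp
  have "Max (range f) \<in> range f" by (rule Max_in[OF fin]) simp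
  then obtain j where j0: "Max (range f) = f j" by (rule imageE)
  have j: "f j = Max (range f)" using j0 by simp
  have ge: "f i \<le> f j" for i unfolding j by (rule Max_ge[OF fin]) simp
  have "(vlen m)^2 = (\<Sum>i\<in>UNIV. (f i)^2)" unfolding vlen_sq dotr_sum f_def by (simp add: power2_eq_square)
  also have "\<dots> \<le> (\<Sum>i\<in>(UNIV::3 set). (f j)^2)"
    by (intro sum_mono power_mono ge) (simp add: f_def)
  also have "\<dots> = 3 * (f j)^2" by simp
  also have "\<dots> \<le> (2 * f j)^2" by (simp add: power_mult_distrib)
  finally have "(vlen m)^2 \<le> (2 * f j)^2" .
  then have "vlen m \<le> 2 * f j" by (rule power2_le_imp_le) (simp add: f_def)
  then show ?thesis using that f_def by blast
qed

lemma Tf_emb_le: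
  fixes m :: "int^3" and j :: 3 and b c n :: int
  assumes M1: "1 \<le> vlen m" and d0: "0 \<le> \<delta>" and d1: "\<delta> < 1"
  defines "M \<equiv> vlen m" and "mj \<equiv> real_of_int (m$j)"
    and "cst \<equiv> real_of_int b * real_of_int (m$(j+1)) + real_of_int c * real_of_int (m$(j+2))"
    and "Bq \<equiv> max \<bar>real_of_int b\<bar> \<bar>real_of_int c\<bar>"
  defines "Q \<equiv> max (2 * M) Bq"
  shows "Tf \<delta> m (emb j n b c) \<le> 16 * Q powr (\<delta> - 2) / (Q^2 + (real_of_int n * mj + cst)^2)
       + (if Bq \<le> 2 * M then 32 * M powr (\<delta> - 4) * (1 / (1 + (cst/(2*M) + real_of_int n * (mj/(2*M)))^2)
            + 1 / (1 + (-mj + real_of_int n * 1)^2)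
            + 1 / (1 + (mj + real_of_int n * 1)^2)) else 0)"
proof -
  have M0: "0 < M" using M1 unfolding M_def by linarith
  have Mdef: "M = vlen m" unfolding M_def ..
  have Qdef: "Q = max (2 * M) Bq" unfolding Q_def ..
  have D: "dotr (emb j n b c) m = real_of_int n * mj + cst"
    unfolding mj_def cst_def by (rule emb_dot)
  have Bq: "max \<bar>real_of_int (emb j n b c $ (j+1))\<bar> \<bar>real_of_int (emb j n b c $ (j+2))\<bar> = Bq"
    unfolding Bq_def by (simp add: emb_comp)
  have e1: "(real_of_int n * mj + cst) / (2 * M) = cst/(2*M) + real_of_int n * (mj/(2*M))"
    using M0 by (simp add: field_simps)
  have e2: "real_of_int (emb j n b c $ j) - real_of_int (m$j) = -mj + real_of_int n * 1"
    unfolding mj_def by (simp add: emb_comp)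
  have e3: "real_of_int (emb j n b c $ j) + real_of_int (m$j) = mj + real_of_int n * 1"
    unfolding mj_def by (simp add: emb_comp)
  have "Tf \<delta> m (emb j n b c) \<le> 16 * Q powr (\<delta> - 2) / (Q^2 + (dotr (emb j n b c) m)^2)
       + (if Bq \<le> 2 * M then 32 * M powr (\<delta> - 4) * (1 / (1 + (dotr (emb j n b c) m/(2*M))^2)
            + 1 / (1 + (real_of_int (emb j n b c $ j) - real_of_int (m$j))^2)
            + 1 / (1 + (real_of_int (emb j n b c $ j) + real_of_int (m$j))^2)) else 0)"
    unfolding Tf_def
    by (rule pt_lattice[OF M1 d0 d1 Mdef refl Bq[symmetric] Qdef])
  also have "\<dots> = 16 * Q powr (\<delta> - 2) / (Q^2 + (real_of_int n * mj + cst)^2)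
       + (if Bq \<le> 2 * M then 32 * M powr (\<delta> - 4) * (1 / (1 + (cst/(2*M) + real_of_int n * (mj/(2*M)))^2)
            + 1 / (1 + (-mj + real_of_int n * 1)^2)
            + 1 / (1 + (mj + real_of_int n * 1)^2)) else 0)"
    by (simp only: D e1 e2 e3)
  finally show ?thesis .
qed

lemma final_M:
  fixes M \<delta> :: real
  assumes M1: "1 \<le> M" and d0: "0 \<le> \<delta>" and d1: "\<delta> < 1"
  shows "(2 * M) powr (\<delta> - 1) / M \<le> 4 * jbr M powr (\<delta> - 2)"
proof -
  have M0: "0 < M" using M1 by linarith
  have "(2 * M) powr (\<delta> - 1) / M = 2 powr (\<delta> - 1) * (M powr (\<delta> - 1) / M)" using M0 by (simp add: powr_mult)
  also have "M powr (\<delta> - 1) / M = M powr (\<delta> - 2)" using M0 by (simp add: powr_diff field_simps power2_eq_square)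
  also have "2 powr (\<delta> - 1) * M powr (\<delta> - 2) \<le> 1 * M powr (\<delta> - 2)"
  proof (rule mult_right_mono)
    have "2 powr (\<delta> - 1) \<le> 2 powr (0::real)" by (rule powr_mono) (use d1 in auto)
    then show "2 powr (\<delta> - 1) \<le> 1" by simp
  qed simp
  also have "1 * M powr (\<delta> - 2) \<le> 4 * jbr M powr (\<delta> - 2)"
  proof -
    have jb: "jbr M \<le> 2 * M"
    proof -
      have mm: "1 \<le> M * M" using mult_mono[OF M1 M1] M0 by simp
      have e: "(2 * M)^2 = 4 * (M * M)" "M^2 = M * M" by (simp_all add: power2_eq_square)
      have "(jbr M)^2 \<le> (2 * M)^2" unfolding jbr_sq e using mm by linarith
      then show ?thesis by (rule power2_le_imp_le) (use M0 in simp)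
    qed
    have "(2 * M) powr (\<delta> - 2) \<le> jbr M powr (\<delta> - 2)" by (rule powr_mono2') (use d1 jbr_pos[of M] jb in auto)
    moreover have "(2 * M) powr (\<delta> - 2) = 2 powr (\<delta> - 2) * M powr (\<delta> - 2)" using M0 by (simp add: powr_mult)
    moreover have "1/4 \<le> 2 powr (\<delta> - 2)"
    proof -
      have "2 powr (-2::real) \<le> 2 powr (\<delta> - 2)" by (rule powr_mono) (use d0 in auto)
      moreover have "2 powr (-2::real) = 1/4" by (simp add: powr_minus powr_numeral)
      ultimately show ?thesis by simp
    qed
    moreover have "(1/4) * M powr (\<delta> - 2) \<le> 2 powr (\<delta> - 2) * M powr (\<delta> - 2)"
      using calculation(3) by (rule mult_right_mono) simp
    ultimately show ?thesis by linarith
  qed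
  finally show ?thesis .
qed

lemma sum_nonzero:
  fixes m :: "int^3" and \<delta> :: real and F :: "(int^3) set"
  assumes M1: "1 \<le> vlen m" and d0: "0 \<le> \<delta>" and d1: "\<delta> < 1" and F: "finite F"
  shows "sum (Tf \<delta> m) F \<le> 4 * K3 * (K2 ((3 - \<delta>)/2))^2 * jbr (vlen m) powr (\<delta> - 2)"
proof -
  obtain j where mj: "vlen m \<le> 2 * \<bar>real_of_int (m$j)\<bar>" by (rule big_coord)
  define M where "M = vlen m"
  have M1': "1 \<le> M" using M1 unfolding M_def .
  have M0: "0 < M" using M1' by linarith
  define g where "g = (\<lambda>b c :: int. K3 * (max (2 * M) (max \<bar>real_of_int b\<bar> \<bar>real_of_int c\<bar>)) powr (\<delta> - 3) / M)"
  have "sum (Tf \<delta> m) F \<le> K3 / M * ((K2 ((3 - \<delta>)/2))^2 * (2 * M) powr (2 - (3 - \<delta>)))"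
  proof (rule fin3[where j = j and g = g, OF Tf_nonneg _ _ F])
    fix b c :: int and N :: "int set" assume N: "finite N"
    define mjr where "mjr = real_of_int (m$j)"
    define cst where "cst = real_of_int b * real_of_int (m$(j+1)) + real_of_int c * real_of_int (m$(j+2))"
    define Bq where "Bq = max \<bar>real_of_int b\<bar> \<bar>real_of_int c\<bar>"
    have "(\<Sum>n\<in>N. Tf \<delta> m (emb j n b c)) \<le> (\<Sum>n\<in>N. 16 * (max (2 * M) Bq) powr (\<delta> - 2) / ((max (2 * M) Bq)^2 + (real_of_int n * mjr + cst)^2)
       + (if Bq \<le> 2 * M then 32 * M powr (\<delta> - 4) * (1 / (1 + (cst/(2*M) + real_of_int n * (mjr/(2*M)))^2)
            + 1 / (1 + (-mjr + real_of_int n * 1)^2)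
            + 1 / (1 + (mjr + real_of_int n * 1)^2)) else 0))"
      unfolding M_def mjr_def cst_def Bq_def by (intro sum_mono Tf_emb_le[OF M1 d0 d1])
    also have "\<dots> \<le> K3 * (max (2 * M) Bq) powr (\<delta> - 3) / M"
      by (rule inner_m[OF M1' _ d0 d1 N]) (use mj in \<open>simp_all add: M_def mjr_def Bq_def\<close>)
    finally show "(\<Sum>n\<in>N. Tf \<delta> m (emb j n b c)) \<le> g b c" unfolding g_def Bq_def .
  next
    fix B C :: "int set" assume B: "finite B" and C: "finite C"
    have "(\<Sum>b\<in>B. \<Sum>c\<in>C. g b c) = K3 / M * (\<Sum>b\<in>B. \<Sum>c\<in>C. (max (2 * M) (max \<bar>real_of_int b\<bar> \<bar>real_of_int c\<bar>)) powr (- (3 - \<delta>)))"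
      unfolding g_def by (simp add: sum_distrib_left)
    also have "\<dots> \<le> K3 / M * ((K2 ((3 - \<delta>)/2))^2 * (2 * M) powr (2 - (3 - \<delta>)))"
      by (rule mult_left_mono[OF Q2]) (use d1 M1' B C M0 in \<open>auto simp: K3_def\<close>)
    finally show "(\<Sum>b\<in>B. \<Sum>c\<in>C. g b c) \<le> K3 / M * ((K2 ((3 - \<delta>)/2))^2 * (2 * M) powr (2 - (3 - \<delta>)))" .
  qed
  also have "\<dots> = K3 * (K2 ((3 - \<delta>)/2))^2 * ((2 * M) powr (\<delta> - 1) / M)" by (simp add: field_simps)
  also have "\<dots> \<le> K3 * (K2 ((3 - \<delta>)/2))^2 * (4 * jbr M powr (\<delta> - 2))"
    by (rule mult_left_mono[OF final_M[OF M1' d0 d1]]) (simp add: K3_def)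
  finally show ?thesis unfolding M_def by (simp add: ac_simps)
qed

lemma rpow_le_jbr: "0 \<le> \<delta> \<Longrightarrow> rpow L \<delta> \<le> jbr L powr \<delta>" if "0 \<le> L"
proof -
  assume d0: "0 \<le> \<delta>"
  show ?thesis
  proof (cases "L = 0")
    case True
    have "1 \<le> jbr L powr \<delta>" using jbr_ge1[of L] d0 by (simp add: ge_one_powr_ge_zero)
    moreover have "rpow L \<delta> \<le> 1" using True unfolding rpow_def by simp
    ultimately show ?thesis by linarith
  next
    case False
    have "L \<le> jbr L" unfolding jbr_def by (rule real_le_rsqrt) simp
    then have "L powr \<delta> \<le> jbr L powr \<delta>" by (intro powr_mono2) (use d0 that in auto)
    then show ?thesis unfolding rpow_def using False by simp
  qed
qed

lemma Tf_zero_le: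
  fixes n b c :: int
  assumes d0: "0 \<le> \<delta>" and d1: "\<delta> < 1"
  defines "Q0 \<equiv> max 1 (max \<bar>real_of_int b\<bar> \<bar>real_of_int c\<bar>)"
  shows "Tf \<delta> 0 (emb 1 n b c) \<le> Q0 powr (\<delta> - 2) / (Q0^2 + (0 + real_of_int n * 1)^2)"
proof -
  define l where "l = emb 1 n b c"
  define L where "L = vlen l"
  define J where "J = jbr L"
  have J0: "0 < J" unfolding J_def by (rule jbr_pos)
  have L2: "L^2 = (real_of_int n)^2 + (real_of_int b)^2 + (real_of_int c)^2"
  proof -
    have c: "emb 1 n b c $ 1 = n" "emb 1 n b c $ 2 = b" "emb 1 n b c $ 3 = c"
      using emb_comp[of 1 n b c] by simp_all
    show ?thesis unfolding L_def vlen_sq dotr_sum sum3_rot[of _ 1] l_def by (simp add: c power2_eq_square)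
  qed
  have J2: "J^2 = 1 + L^2" unfolding J_def by (rule jbr_sq)
  have Q0p: "0 < Q0" unfolding Q0_def by simp
  have Q0sq: "Q0^2 \<le> 1 + (real_of_int b)^2 + (real_of_int c)^2"
  proof -
    have "Q0 = 1 \<or> Q0 = \<bar>real_of_int b\<bar> \<or> Q0 = \<bar>real_of_int c\<bar>" unfolding Q0_def by (auto simp: max_def)
    then show ?thesis
    proof (elim disjE)
      assume "Q0 = 1" then show ?thesis by simp
    next
      assume "Q0 = \<bar>real_of_int b\<bar>" then have "Q0^2 = (real_of_int b)^2" by simp
      then show ?thesis by simp
    next
      assume "Q0 = \<bar>real_of_int c\<bar>" then have "Q0^2 = (real_of_int c)^2" by simp
      then show ?thesis by simp
    qed
  qed
  have QJ: "Q0 \<le> J"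
  proof -
    have "Q0^2 \<le> J^2" using Q0sq J2 L2 zero_le_power2[of "real_of_int n"] by linarith
    then show ?thesis by (rule power2_le_imp_le) (use J0 in simp)
  qed
  have w: "rpow L \<delta> \<le> J powr \<delta>" unfolding J_def by (rule rpow_le_jbr) (simp_all add: L_def vlen_nonneg d0)
  have "Tf \<delta> 0 l = rpow L \<delta> / (J^2)^2"
    unfolding Tf_def L_def J_def by (simp add: jbr0 power_mult_distrib)
  also have "\<dots> \<le> J powr \<delta> / (J^2)^2" by (rule divide_right_mono[OF w]) simp
  also have "\<dots> = J powr (\<delta> - 2) / J^2"
    using J0 by (simp add: powr_diff powr_realpow[of J 2, simplified] field_simps power2_eq_square)
  also have "\<dots> \<le> Q0 powr (\<delta> - 2) / (Q0^2 + (0 + real_of_int n * 1)^2)"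
  proof (rule quot_le)
    show "0 \<le> J powr (\<delta> - 2)" by simp
    show "J powr (\<delta> - 2) \<le> Q0 powr (\<delta> - 2)" by (rule powr_mono2') (use d1 Q0p QJ in auto)
    show "0 < Q0^2 + (0 + real_of_int n * 1)^2" using Q0p by (simp add: add_pos_nonneg)
    show "Q0^2 + (0 + real_of_int n * 1)^2 \<le> J^2" using Q0sq J2 L2 by (simp only: add_0_left mult_1_right)
  qed
  finally show ?thesis unfolding l_def .
qed

lemma sum_zero:
  fixes \<delta> :: real and F :: "(int^3) set"
  assumes d0: "0 \<le> \<delta>" and d1: "\<delta> < 1" and F: "finite F"
  shows "sum (Tf \<delta> 0) F \<le> 6 * pi * (K2 ((3 - \<delta>)/2))^2"
proof -
  define g where "g = (\<lambda>b c :: int. 6 * pi * (max 1 (max \<bar>real_of_int b\<bar> \<bar>real_of_int c\<bar>)) powr (- (3 - \<delta>)))"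
  have "sum (Tf \<delta> 0) F \<le> 6 * pi * ((K2 ((3 - \<delta>)/2))^2 * 1 powr (2 - (3 - \<delta>)))"
  proof (rule fin3[where j = 1 and g = g, OF Tf_nonneg _ _ F])
    fix b c :: int and N :: "int set" assume N: "finite N"
    define Q0 where "Q0 = max 1 (max \<bar>real_of_int b\<bar> \<bar>real_of_int c\<bar>)"
    have Q0p: "0 < Q0" "1 \<le> Q0" unfolding Q0_def by auto
    have "(\<Sum>n\<in>N. Tf \<delta> 0 (emb 1 n b c)) \<le> (\<Sum>n\<in>N. Q0 powr (\<delta> - 2) / (Q0^2 + (real_of_int n * 1 + 0)^2))"
      unfolding Q0_def by (intro sum_mono) (use Tf_zero_le[OF d0 d1] in \<open>simp add: add.commute\<close>)
    also have "\<dots> = Q0 powr (\<delta> - 2) * (\<Sum>n\<in>N. 1 / (Q0^2 + (real_of_int n * 1 + 0)^2))"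
      by (simp add: sum_distrib_left)
    also have "\<dots> \<le> Q0 powr (\<delta> - 2) * (3 * pi * (1 + Q0/\<bar>1\<bar>) / Q0^2)"
      by (rule mult_left_mono[OF Lj[OF Q0p(1) _ N]]) simp_all
    also have "\<dots> \<le> Q0 powr (\<delta> - 2) * (3 * pi * (2 * Q0) / Q0^2)"
      using Q0p by (intro mult_left_mono divide_right_mono) auto
    also have "\<dots> = 6 * pi * (Q0 powr (\<delta> - 2) / Q0)" using Q0p by (simp add: field_simps power2_eq_square)
    also have "Q0 powr (\<delta> - 2) / Q0 = Q0 powr (- (3 - \<delta>))"
      using Q0p by (simp add: powr_diff powr_minus field_simps power2_eq_square power3_eq_cube)
    finally show "(\<Sum>n\<in>N. Tf \<delta> 0 (emb 1 n b c)) \<le> g b c" unfolding g_def Q0_def by simp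
  next
    fix B C :: "int set" assume B: "finite B" and C: "finite C"
    have "(\<Sum>b\<in>B. \<Sum>c\<in>C. g b c) = 6 * pi * (\<Sum>b\<in>B. \<Sum>c\<in>C. (max 1 (max \<bar>real_of_int b\<bar> \<bar>real_of_int c\<bar>)) powr (- (3 - \<delta>)))"
      unfolding g_def by (simp add: sum_distrib_left)
    also have "\<dots> \<le> 6 * pi * ((K2 ((3 - \<delta>)/2))^2 * 1 powr (2 - (3 - \<delta>)))"
      by (rule mult_left_mono[OF Q2]) (use d1 B C in auto)
    finally show "(\<Sum>b\<in>B. \<Sum>c\<in>C. g b c) \<le> 6 * pi * ((K2 ((3 - \<delta>)/2))^2 * 1 powr (2 - (3 - \<delta>)))" .
  qed
  then show ?thesis by simp
qed

lemma kappa_ge1: "1 \<le> pi * lam"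
proof -
  have "3 + sqrt 2 < 5" using sqrt2_less_2 by simp
  then have "2/5 \<le> lam" unfolding lam_def
    by (intro divide_left_mono) (auto intro!: mult_pos_pos add_pos_nonneg)
  then have "3 * (2/5) \<le> pi * lam" using pi_gt3 by (intro mult_mono) auto
  then show ?thesis by simp
qed

definition C1 :: real where "C1 = 16 * (4 * pi)^2 * 12"

lemma C1_pos: "0 < C1" unfolding C1_def by simp

lemma beta_bound:
  fixes \<gamma> R :: real and l m :: "int^3"
  assumes g0: "0 \<le> \<gamma>" and g1: "\<gamma> \<le> 1" and R0: "0 < R"
  shows "\<bar>beta \<gamma> R l m\<bar> \<le> C1 * R powr (3 + \<gamma>)
           / (jbr (vlen (l + m)) * jbr (vlen (l - m)) * jbr (vlen (l + m) - vlen (l - m)))"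
proof -
  define U where "U = vlen (l + m)"
  define V where "V = vlen (l - m)"
  define k where "k = pi * lam"
  have k1: "1 \<le> k" unfolding k_def by (rule kappa_ge1)
  define I where "I = integral {0..1} (\<lambda>r. r powr (2 + \<gamma>) * sinc ((k * V) * r) * sinc ((k * U) * r))"
  have beq: "beta \<gamma> R l m = (2 * R) powr (3 + \<gamma>) * (4 * pi)^2 * I"
  proof -
    have "(\<lambda>r. r powr (2 + \<gamma>) * sinc (pi * lam * r * vlen (l - m)) * sinc (pi * lam * r * vlen (l + m)))
        = (\<lambda>r. r powr (2 + \<gamma>) * sinc ((k * V) * r) * sinc ((k * U) * r))"
      unfolding k_def U_def V_def by (simp add: ac_simps)
    then show ?thesis unfolding beta_def I_def by simp
  qed
  have V01: "k * V = 0 \<or> 1 \<le> k * V"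
    using vlen_cases[of "l - m"] k1 unfolding V_def by (auto intro: order.trans[OF _ mult_mono[of 1 k 1]])
  have U01: "k * U = 0 \<or> 1 \<le> k * U"
    using vlen_cases[of "l + m"] k1 unfolding U_def by (auto intro: order.trans[OF _ mult_mono[of 1 k 1]])
  have U0: "0 \<le> U" and V0: "0 \<le> V" unfolding U_def V_def by (simp_all add: vlen_nonneg)
  have bI: "\<bar>I\<bar> \<le> 12 / (jbr (k * V) * jbr (k * U) * jbr (k * U - k * V))"
    unfolding I_def by (rule I_bound[OF g0 g1 V01 U01])
  have j1: "jbr V \<le> jbr (k * V)" by (rule jbr_mono) (use k1 V0 mult_right_mono[OF k1 V0] in \<open>simp add: abs_mult\<close>)
  have j2: "jbr U \<le> jbr (k * U)" by (rule jbr_mono) (use k1 U0 mult_right_mono[OF k1 U0] in \<open>simp add: abs_mult\<close>)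
  have j3: "jbr (U - V) \<le> jbr (k * U - k * V)"
  proof (rule jbr_mono)
    have "\<bar>k * U - k * V\<bar> = k * \<bar>U - V\<bar>" using k1 by (simp add: right_diff_distrib[symmetric] abs_mult)
    then show "\<bar>U - V\<bar> \<le> \<bar>k * U - k * V\<bar>" using k1 by (simp add: mult_le_cancel_right1)
  qed
  have pp: "0 < jbr V * jbr U * jbr (U - V)" by (simp add: jbr_pos)
  have "jbr V * jbr U * jbr (U - V) \<le> jbr (k * V) * jbr (k * U) * jbr (k * U - k * V)"
    using j1 j2 j3 by (intro mult_mono) (simp_all add: jbr_pos less_imp_le)
  then have bI2: "\<bar>I\<bar> \<le> 12 / (jbr U * jbr V * jbr (U - V))"
    using bI pp by (smt (verit) frac_le mult.commute)
  have p2: "(2 * R) powr (3 + \<gamma>) \<le> 16 * R powr (3 + \<gamma>)"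
  proof -
    have "(2 * R) powr (3 + \<gamma>) = 2 powr (3 + \<gamma>) * R powr (3 + \<gamma>)" using R0 by (simp add: powr_mult)
    moreover have "2 powr (3 + \<gamma>) \<le> 2 powr (4::real)" by (rule powr_mono) (use g1 in auto)
    moreover have "2 powr (4::real) = 16" by (simp add: powr_numeral)
    ultimately show ?thesis by (simp add: mult_right_mono)
  qed
  have "\<bar>beta \<gamma> R l m\<bar> = (2 * R) powr (3 + \<gamma>) * (4 * pi)^2 * \<bar>I\<bar>" unfolding beq by (simp add: abs_mult)
  also have "\<dots> \<le> (16 * R powr (3 + \<gamma>)) * (4 * pi)^2 * (12 / (jbr U * jbr V * jbr (U - V)))"
    using p2 bI2 by (intro mult_mono) (simp_all add: jbr_pos)
  also have "\<dots> = C1 * R powr (3 + \<gamma>) / (jbr U * jbr V * jbr (U - V))" unfolding C1_def by simp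
  finally show ?thesis unfolding U_def V_def .
qed

lemma beta_sym: "beta \<gamma> R l m = beta \<gamma> R m l"
  unfolding beta_def by (simp only: vlen_comm)

definition Kd :: "real \<Rightarrow> real" where
  "Kd \<delta> = 4 * K3 * (K2 ((3 - \<delta>)/2))^2 + 6 * pi * (K2 ((3 - \<delta>)/2))^2"

lemma Kd_pos: "\<delta> < 1 \<Longrightarrow> 0 < Kd \<delta>"
  unfolding Kd_def K3_def using K2_pos[of "(3 - \<delta>)/2"] by (simp add: add_pos_pos)

lemma sumTf:
  assumes d0: "0 \<le> \<delta>" and d1: "\<delta> < 1" and F: "finite F"
  shows "sum (Tf \<delta> m) F \<le> Kd \<delta> * jbr (vlen m) powr (\<delta> - 2)"
proof (cases "m = 0")
  case True
  have "sum (Tf \<delta> m) F \<le> 6 * pi * (K2 ((3 - \<delta>)/2))^2" using sum_zero[OF d0 d1 F] True by simp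
  also have "\<dots> \<le> Kd \<delta>" unfolding Kd_def K3_def by simp
  also have "\<dots> = Kd \<delta> * jbr (vlen m) powr (\<delta> - 2)"
  proof -
    have "vlen m = 0" using True vlen_zero_iff by simp
    then show ?thesis by (simp add: jbr0)
  qed
  finally show ?thesis .
next
  case False
  then have M1: "1 \<le> vlen m" using vlen_cases[of m] vlen_zero_iff[of m] by auto
  have "sum (Tf \<delta> m) F \<le> 4 * K3 * (K2 ((3 - \<delta>)/2))^2 * jbr (vlen m) powr (\<delta> - 2)"
    by (rule sum_nonzero[OF M1 d0 d1 F])
  also have "\<dots> \<le> Kd \<delta> * jbr (vlen m) powr (\<delta> - 2)"
    unfolding Kd_def by (intro mult_right_mono) simp_all
  finally show ?thesis .
qed

lemma summand_le:
  fixes \<gamma> R \<delta> :: real and l m :: "int^3"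
  assumes g0: "0 \<le> \<gamma>" and g1: "\<gamma> \<le> 1" and R0: "0 < R"
  shows "rpow (vlen l) \<delta> * (beta \<gamma> R l m)^2 \<le> C1^2 * R powr (2 * (3 + \<gamma>)) * Tf \<delta> m l"
proof -
  define Pm where "Pm = jbr (vlen (l + m)) * jbr (vlen (l - m)) * jbr (vlen (l + m) - vlen (l - m))"
  have Pm0: "0 < Pm" unfolding Pm_def by (simp add: jbr_pos)
  have b: "\<bar>beta \<gamma> R l m\<bar> \<le> C1 * R powr (3 + \<gamma>) / Pm" unfolding Pm_def by (rule beta_bound[OF g0 g1 R0])
  have "\<bar>beta \<gamma> R l m\<bar>^2 \<le> (C1 * R powr (3 + \<gamma>) / Pm)^2" by (rule power_mono[OF b]) simp
  then have b2: "(beta \<gamma> R l m)^2 \<le> (C1 * R powr (3 + \<gamma>) / Pm)^2" by simp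
  have "rpow (vlen l) \<delta> * (beta \<gamma> R l m)^2 \<le> rpow (vlen l) \<delta> * (C1 * R powr (3 + \<gamma>) / Pm)^2"
    by (rule mult_left_mono[OF b2 rpow_nonneg])
  also have "\<dots> = C1^2 * (R powr (3 + \<gamma>))^2 * (rpow (vlen l) \<delta> / Pm^2)"
    by (simp add: power_divide power_mult_distrib)
  also have "(R powr (3 + \<gamma>))^2 = R powr (2 * (3 + \<gamma>))"
    by (simp add: power2_eq_square powr_add[symmetric])
  also have "rpow (vlen l) \<delta> / Pm^2 = Tf \<delta> m l" unfolding Tf_def Pm_def ..
  finally show ?thesis .
qed

lemma part2_one:
  fixes \<gamma> R \<delta> :: real and m :: "int^3"
  assumes g0: "0 \<le> \<gamma>" and g1: "\<gamma> \<le> 1" and R0: "0 < R" and d0: "0 \<le> \<delta>" and d1: "\<delta> < 1"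
  shows "(\<lambda>l. rpow (vlen l) \<delta> * (beta \<gamma> R l m)\<^sup>2) summable_on UNIV \<and>
         (\<Sum>\<^sub>\<infinity>l. rpow (vlen l) \<delta> * (beta \<gamma> R l m)\<^sup>2)
           \<le> (C1^2 * Kd \<delta>) * R powr (2 * (3 + \<gamma>)) * jbr (vlen m) powr (-2 + \<delta>)"
proof -
  define f where "f = (\<lambda>l. rpow (vlen l) \<delta> * (beta \<gamma> R l m)\<^sup>2)"
  define B where "B = (C1^2 * Kd \<delta>) * R powr (2 * (3 + \<gamma>)) * jbr (vlen m) powr (-2 + \<delta>)"
  have f0: "0 \<le> f l" for l unfolding f_def by (simp add: rpow_nonneg)
  have fs: "sum f F \<le> B" if F: "finite F" for F
  proof -
    have "sum f F \<le> (\<Sum>l\<in>F. C1^2 * R powr (2 * (3 + \<gamma>)) * Tf \<delta> m l)"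
      unfolding f_def by (intro sum_mono summand_le[OF g0 g1 R0])
    also have "\<dots> = C1^2 * R powr (2 * (3 + \<gamma>)) * sum (Tf \<delta> m) F" by (simp add: sum_distrib_left)
    also have "\<dots> \<le> C1^2 * R powr (2 * (3 + \<gamma>)) * (Kd \<delta> * jbr (vlen m) powr (\<delta> - 2))"
      by (rule mult_left_mono[OF sumTf[OF d0 d1 F]]) simp
    also have "\<dots> = B" unfolding B_def by (simp add: ac_simps)
    finally show ?thesis .
  qed
  have sm: "f summable_on UNIV"
  proof (rule nonneg_bdd_above_summable_on)
    show "bdd_above (sum f ` {F. F \<subseteq> UNIV \<and> finite F})"
      by (rule bdd_aboveI2[where M = B]) (use fs in auto)
  qed (use f0 in auto)
  have "infsum f UNIV \<le> B" by (rule infsum_le_finite_sums[OF sm]) (use fs in auto)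
  then show ?thesis using sm unfolding f_def B_def by simp
qed

theorem lemma2p3:
  fixes \<gamma> :: real
  assumes "0 \<le> \<gamma>" and "\<gamma> \<le> 1"
  shows "(\<exists>C>0. \<forall>R>0. \<forall>l m :: int ^ 3.
            \<bar>beta \<gamma> R l m\<bar> \<le> C * R powr (3 + \<gamma>)
              / (jbr (vlen (l + m)) * jbr (vlen (l - m)) * jbr (vlen (l + m) - vlen (l - m))))
       \<and> (\<forall>\<delta>::real. 0 \<le> \<delta> \<longrightarrow> \<delta> < 1 \<longrightarrow>
           (\<exists>C>0. \<forall>R>0.
              (\<forall>m :: int ^ 3.
                 (\<lambda>l. rpow (vlen l) \<delta> * (beta \<gamma> R l m)\<^sup>2) summable_on UNIV \<and>
                 (\<Sum>\<^sub>\<infinity>l. rpow (vlen l) \<delta> * (beta \<gamma> R l m)\<^sup>2)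
                   \<le> C * R powr (2 * (3 + \<gamma>)) * jbr (vlen m) powr (-2 + \<delta>)) \<and>
              (\<forall>l :: int ^ 3.
                 (\<lambda>m. rpow (vlen m) \<delta> * (beta \<gamma> R l m)\<^sup>2) summable_on UNIV \<and>
                 (\<Sum>\<^sub>\<infinity>m. rpow (vlen m) \<delta> * (beta \<gamma> R l m)\<^sup>2)
                   \<le> C * R powr (2 * (3 + \<gamma>)) * jbr (vlen l) powr (-2 + \<delta>))))"
proof (intro conjI allI impI)
  show "\<exists>C>0. \<forall>R>0. \<forall>l m :: int ^ 3.
            \<bar>beta \<gamma> R l m\<bar> \<le> C * R powr (3 + \<gamma>)
              / (jbr (vlen (l + m)) * jbr (vlen (l - m)) * jbr (vlen (l + m) - vlen (l - m)))"
    using beta_bound[OF assms] C1_pos by blast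
next
  fix \<delta> :: real assume d0: "0 \<le> \<delta>" and d1: "\<delta> < 1"
  have Cp: "0 < C1^2 * Kd \<delta>" using C1_pos Kd_pos[OF d1] by simp
  have "\<forall>R>0.
              (\<forall>m :: int ^ 3.
                 (\<lambda>l. rpow (vlen l) \<delta> * (beta \<gamma> R l m)\<^sup>2) summable_on UNIV \<and>
                 (\<Sum>\<^sub>\<infinity>l. rpow (vlen l) \<delta> * (beta \<gamma> R l m)\<^sup>2)
                   \<le> (C1^2 * Kd \<delta>) * R powr (2 * (3 + \<gamma>)) * jbr (vlen m) powr (-2 + \<delta>)) \<and>
              (\<forall>l :: int ^ 3.
                 (\<lambda>m. rpow (vlen m) \<delta> * (beta \<gamma> R l m)\<^sup>2) summable_on UNIV \<and>
                 (\<Sum>\<^sub>\<infinity>m. rpow (vlen m) \<delta> * (beta \<gamma> R l m)\<^sup>2)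
                   \<le> (C1^2 * Kd \<delta>) * R powr (2 * (3 + \<gamma>)) * jbr (vlen l) powr (-2 + \<delta>))"
  proof (intro allI impI conjI)
    fix R :: real and m :: "int^3" assume R0: "0 < R"
    note P = part2_one[OF assms R0 d0 d1, of m]
    show "(\<lambda>l. rpow (vlen l) \<delta> * (beta \<gamma> R l m)\<^sup>2) summable_on UNIV" using P by blast
    show "(\<Sum>\<^sub>\<infinity>l. rpow (vlen l) \<delta> * (beta \<gamma> R l m)\<^sup>2)
                   \<le> (C1^2 * Kd \<delta>) * R powr (2 * (3 + \<gamma>)) * jbr (vlen m) powr (-2 + \<delta>)" using P by blast
  next
    fix R :: real and l :: "int^3" assume R0: "0 < R"
    note P = part2_one[OF assms R0 d0 d1, of l]
    have eq: "(\<lambda>m. rpow (vlen m) \<delta> * (beta \<gamma> R l m)\<^sup>2) = (\<lambda>m. rpow (vlen m) \<delta> * (beta \<gamma> R m l)\<^sup>2)"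
      by (simp add: beta_sym[of \<gamma> R l])
    show "(\<lambda>m. rpow (vlen m) \<delta> * (beta \<gamma> R l m)\<^sup>2) summable_on UNIV" unfolding eq using P by blast
    show "(\<Sum>\<^sub>\<infinity>m. rpow (vlen m) \<delta> * (beta \<gamma> R l m)\<^sup>2)
                   \<le> (C1^2 * Kd \<delta>) * R powr (2 * (3 + \<gamma>)) * jbr (vlen l) powr (-2 + \<delta>)" unfolding eq using P by blast
  qed
  then show "\<exists>C>0. \<forall>R>0.
              (\<forall>m :: int ^ 3.
                 (\<lambda>l. rpow (vlen l) \<delta> * (beta \<gamma> R l m)\<^sup>2) summable_on UNIV \<and>
                 (\<Sum>\<^sub>\<infinity>l. rpow (vlen l) \<delta> * (beta \<gamma> R l m)\<^sup>2)
                   \<le> C * R powr (2 * (3 + \<gamma>)) * jbr (vlen m) powr (-2 + \<delta>)) \<and>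
              (\<forall>l :: int ^ 3.
                 (\<lambda>m. rpow (vlen m) \<delta> * (beta \<gamma> R l m)\<^sup>2) summable_on UNIV \<and>
                 (\<Sum>\<^sub>\<infinity>m. rpow (vlen m) \<delta> * (beta \<gamma> R l m)\<^sup>2)
                   \<le> C * R powr (2 * (3 + \<gamma>)) * jbr (vlen l) powr (-2 + \<delta>))"
    using Cp by blast
qed

end
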